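(* Let $G$ be a directed graph on vertex set $[n]$ and write $$\omega B_G(\mathbf x;y+1,z+1)=\sum_{\alpha\vDash n}c^G_\alpha(y,z)\frac{\Psi_\alpha(\mathbf x)}{z_\alpha}.$$ Then $c^G_\alpha(y,z)\in\mathbb N[y,z]$ for all compositions $\alpha$.
   Context: For a coloring $\kappa:[n]\to\mathbb Z_{>0}$, $\mathrm{asc}(\kappa)$ is the number of directed edges $(i,j)$ of $G$ with $\kappa(i)<\kappa(j)$ and $\mathrm{inv}(\kappa)$ is the number of directed edges $(i,j)$ with $\kappa(i)>\kappa(j)$ (edges counted with multiplicity). The $B$-polynomial is $B_G(\mathbf x;y,z)=\sum_{\kappa:[n]\to\mathbb Z_{>0}}x_{\kappa(1)}\cdots x_{\kappa(n)}y^{\mathrm{asc}(\kappa)}z^{\mathrm{inv}(\kappa)}$. $\omega$ is the linear automorphism of quasisymmetric functions with $\omega(F_{n,S})=F_{n,[n-1]\setminus(n-S)}$, where $F_{n,S}=\sum_{j_1\le\dots\le j_n,\ j_i<j_{i+1}\ (i\in S)}x_{j_1}\cdots x_{j_n}$ and $n-S=\{n-s:s\in S\}$, extended coefficientwise in $y,z$. Here $z_\alpha=\prod_i i^{m_i}m_i!$ ($m_i$ the number of parts of $\alpha$ equal to $i$) is a constant, not the variable $z$. For compositions: $S_\alpha=\{\alpha_1,\dots,\alpha_1+\dots+\alpha_{\ell-1}\}$, blocks $B_i(\alpha)$ consecutive intervals of sizes $\alpha_i$, $\alpha\le\beta$ iff $S_\beta\subseteq S_\alpha$; $M_\alpha=\sum_{i_1<\dots<i_\ell}x_{i_1}^{\alpha_1}\cdots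 x_{i_\ell}^{\alpha_\ell}$; $\pi(\gamma)=\prod_i(\gamma_1+\dots+\gamma_i)$; $\pi(\alpha,\beta)=\prod_i\pi(\alpha^{(i)})$ with $\alpha^{(i)}$ the parts of $\alpha$ whose blocks lie in $B_i(\beta)$; $\Psi_\alpha=z_\alpha\sum_{\beta\ge\alpha}\pi(\alpha,\beta)^{-1}M_\beta$. *)

theory Defs
  imports "HOL-Computational_Algebra.Polynomial" "HOL-Library.Multiset" "HOL-Library.FuncSet"
begin

text \<open>Coefficient ring: bivariate rational polynomials in y (outer) and z (inner).\<close>
type_synonym rpoly2 = "rat poly poly"

definition yvar :: rpoly2 where "yvar = monom 1 1"
definition zvar :: rpoly2 where "zvar = [:monom 1 1:]"
definition const2 :: "rat \<Rightarrow> rpoly2" where "const2 r = [:[:r:]:]"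

definition in_Nyz :: "rpoly2 \<Rightarrow> bool" where
  "in_Nyz p \<longleftrightarrow> (\<forall>i j. coeff (coeff p i) j \<in> \<nat>)"

text \<open>A homogeneous formal power series in x_1, x_2, ... is represented by its
  coefficient function on exponent vectors e (e j = exponent of x_j, j >= 1).\<close>

definition asc :: "(nat \<times> nat) multiset \<Rightarrow> (nat \<Rightarrow> nat) \<Rightarrow> nat" where
  "asc E \<kappa> = size (filter_mset (\<lambda>(i,j). \<kappa> i < \<kappa> j) E)"
definition inv :: "(nat \<times> nat) multiset \<Rightarrow> (nat \<Rightarrow> nat) \<Rightarrow> nat" where
  "inv E \<kappa> = size (filter_mset (\<lambda>(i,j). \<kappa> i > \<kappa> j) E)"

definition Bcoef :: "nat \<Rightarrow> (nat \<times> nat) multiset \<Rightarrow> rpoly2 \<Rightarrow> rpoly2 \<Rightarrow> (nat \<Rightarrow> nat) \<Rightarrow> rpoly2" where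
  "Bcoef n E Y Z e = (\<Sum>\<kappa>\<in>{\<kappa>\<in>{1..n} \<rightarrow>\<^sub>E {1..}. \<forall>j. card {i\<in>{1..n}. \<kappa> i = j} = e j}.
      Y ^ asc E \<kappa> * Z ^ inv E \<kappa>)"

definition Fcoef :: "nat \<Rightarrow> nat set \<Rightarrow> (nat \<Rightarrow> nat) \<Rightarrow> nat" where
  "Fcoef n S e = card {js. length js = n \<and> sorted js \<and> (\<forall>j\<in>set js. 1 \<le> j)
      \<and> (\<forall>i\<in>S. js ! (i - 1) < js ! i) \<and> (\<forall>j. count_list js j = e j)}"

definition comps :: "nat \<Rightarrow> nat list set" where
  "comps n = {\<alpha>. (\<forall>a\<in>set \<alpha>. 0 < a) \<and> sum_list \<alpha> = n}"

definition psum :: "nat list \<Rightarrow> nat \<Rightarrow> nat" where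
  "psum \<alpha> k = sum_list (take k \<alpha>)"

definition Sset :: "nat list \<Rightarrow> nat set" where
  "Sset \<alpha> = psum \<alpha> ` {1..<length \<alpha>}"

definition comp_le :: "nat list \<Rightarrow> nat list \<Rightarrow> bool" where
  "comp_le \<alpha> \<beta> \<longleftrightarrow> Sset \<beta> \<subseteq> Sset \<alpha>"

definition Mcoef :: "nat list \<Rightarrow> (nat \<Rightarrow> nat) \<Rightarrow> nat" where
  "Mcoef \<alpha> e = (if \<exists>is. length is = length \<alpha> \<and> sorted_wrt (<) is \<and> (\<forall>i\<in>set is. 1 \<le> i)
      \<and> (\<forall>j. e j = (\<Sum>k<length \<alpha>. if is ! k = j then \<alpha> ! k else 0)) then 1 else 0)"

definition pi_comp :: "nat list \<Rightarrow> nat" where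
  "pi_comp \<gamma> = (\<Prod>i<length \<gamma>. psum \<gamma> (Suc i))"

text \<open>alpha^(i): parts of alpha whose blocks lie in the i-th block of beta (i from 0).\<close>
definition subcomp :: "nat list \<Rightarrow> nat list \<Rightarrow> nat \<Rightarrow> nat list" where
  "subcomp \<alpha> \<beta> i = map (nth \<alpha>) (filter (\<lambda>k. psum \<beta> i \<le> psum \<alpha> k \<and> psum \<alpha> (Suc k) \<le> psum \<beta> (Suc i))
      [0..<length \<alpha>])"

definition pi_pair :: "nat list \<Rightarrow> nat list \<Rightarrow> nat" where
  "pi_pair \<alpha> \<beta> = (\<Prod>i<length \<beta>. pi_comp (subcomp \<alpha> \<beta> i))"

definition zee :: "nat list \<Rightarrow> nat" where
  "zee \<alpha> = (\<Prod>i\<in>set \<alpha>. i ^ count_list \<alpha> i * fact (count_list \<alpha> i))"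

definition Psicoef :: "nat \<Rightarrow> nat list \<Rightarrow> (nat \<Rightarrow> nat) \<Rightarrow> rpoly2" where
  "Psicoef n \<alpha> e = const2 (of_nat (zee \<alpha>)) *
     (\<Sum>\<beta>\<in>{\<beta>\<in>comps n. comp_le \<alpha> \<beta>}. const2 (inverse (of_nat (pi_pair \<alpha> \<beta>))) * of_nat (Mcoef \<beta> e))"

definition omega_set :: "nat \<Rightarrow> nat set \<Rightarrow> nat set" where
  "omega_set n S = {1..<n} - (\<lambda>s. n - s) ` S"

end

theory Submission
  imports Defs
begin

fun disj :: "'a set list \<Rightarrow> bool" where
  "disj [] = True"
| "disj (B#xs) = (B \<inter> \<Union>(set xs) = {} \<and> disj xs)"

definition osp :: "'a set \<Rightarrow> 'a set list set" where
  "osp X = {xs. {} \<notin> set xs \<and> disj xs \<and> \<Union>(set xs) = X}"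

lemma disj_append[simp]: "disj (xs @ ys) = (disj xs \<and> disj ys \<and> \<Union>(set xs) \<inter> \<Union>(set ys) = {})"
  by (induction xs) auto

lemma osp_Nil[simp]: "osp {} = {[]}"
  unfolding osp_def by (auto, case_tac x, auto)

lemma Nil_in_osp[simp]: "([] \<in> osp X) = (X = {})"
  by (auto simp: osp_def)

lemma disj_distinct: "disj xs \<Longrightarrow> {} \<notin> set xs \<Longrightarrow> distinct xs"
  by (induction xs) auto

lemma osp_sub: "xs \<in> osp X \<Longrightarrow> set xs \<subseteq> Pow X"
  by (auto simp: osp_def)

lemma finite_osp: "finite X \<Longrightarrow> finite (osp X)"
proof -
  assume f: "finite X"
  have "osp X \<subseteq> {xs. set xs \<subseteq> Pow X \<and> length xs \<le> card (Pow X)}"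
  proof
    fix xs assume xs: "xs \<in> osp X"
    hence d: "distinct xs" using disj_distinct by (auto simp: osp_def)
    have s: "set xs \<subseteq> Pow X" using osp_sub[OF xs] .
    have "length xs = card (set xs)" using d by (simp add: distinct_card)
    also have "\<dots> \<le> card (Pow X)" using s f by (intro card_mono) auto
    finally show "xs \<in> {xs. set xs \<subseteq> Pow X \<and> length xs \<le> card (Pow X)}" using s by auto
  qed
  moreover have "finite {xs. set xs \<subseteq> Pow X \<and> length xs \<le> card (Pow X)}"
    using f by (intro finite_lists_length_le) auto
  ultimately show ?thesis by (rule finite_subset)
qed

lemma osp_card_sum: "finite X \<Longrightarrow> xs \<in> osp X \<Longrightarrow> sum_list (map card xs) = card X"
proof (induction xs arbitrary: X)
  case Nil thus ?case by (simp add: osp_def)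
next
  case (Cons B xs)
  hence "xs \<in> osp (\<Union>(set xs))" "B \<inter> \<Union>(set xs) = {}" "X = B \<union> \<Union>(set xs)"
    by (auto simp: osp_def)
  moreover have "finite (\<Union>(set xs))" "finite B" using Cons.prems \<open>X = _\<close> by auto
  ultimately show ?case using Cons.IH by (simp add: card_Un_disjoint)
qed

lemma osp_len: "finite X \<Longrightarrow> xs \<in> osp X \<Longrightarrow> length xs \<le> card X"
proof -
  assume f: "finite X" and xs: "xs \<in> osp X"
  have "\<forall>B\<in>set xs. 1 \<le> card B"
  proof
    fix B assume B: "B \<in> set xs"
    hence "B \<subseteq> X" "B \<noteq> {}" using xs by (auto simp: osp_def)
    hence "finite B" "B \<noteq> {}" using f finite_subset by auto
    thus "1 \<le> card B" by (simp add: Suc_leI card_gt_0_iff)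
  qed
  hence "sum_list (map (\<lambda>_. 1::nat) xs) \<le> sum_list (map card xs)"
    by (intro sum_list_mono) auto
  thus ?thesis using osp_card_sum[OF f xs] by (simp add: sum_list_triv)
qed

lemma osp_append: "A \<subseteq> X \<Longrightarrow> xs1 \<in> osp A \<Longrightarrow> xs2 \<in> osp (X - A) \<Longrightarrow> xs1 @ xs2 \<in> osp X"
  by (auto simp: osp_def)

lemma osp_take_drop:
  assumes xs: "xs \<in> osp X"
  shows "take k xs \<in> osp (\<Union>(set (take k xs)))" "drop k xs \<in> osp (X - \<Union>(set (take k xs)))"
proof -
  have "disj (take k xs @ drop k xs)" using xs by (simp add: osp_def)
  hence d: "disj (take k xs)" "disj (drop k xs)" "\<Union>(set (take k xs)) \<inter> \<Union>(set (drop k xs)) = {}"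
    by (simp_all only: disj_append)
  have e: "{} \<notin> set xs" "\<Union>(set xs) = X" using xs by (auto simp: osp_def)
  have u: "X = \<Union>(set (take k xs)) \<union> \<Union>(set (drop k xs))"
    using e(2) append_take_drop_id[of k xs] by (metis Union_Un_distrib set_append)
  have "{} \<notin> set (take k xs)" "{} \<notin> set (drop k xs)" using e(1) in_set_takeD in_set_dropD by metis+
  moreover have "X - \<Union>(set (take k xs)) = \<Union>(set (drop k xs))" using u d(3) by blast
  ultimately show "take k xs \<in> osp (\<Union>(set (take k xs)))" "drop k xs \<in> osp (X - \<Union>(set (take k xs)))"
    using d by (simp_all add: osp_def)
qed

lemma split_bij:
  "bij_betw (\<lambda>(A, xs1, xs2). (xs1 @ xs2, length xs1))
     (SIGMA A:Pow X. osp A \<times> osp (X - A)) {(xs, k). xs \<in> osp X \<and> k \<le> length xs}"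
proof (rule bij_betw_byWitness[where f' = "\<lambda>(xs, k). (\<Union>(set (take k xs)), take k xs, drop k xs)"])
  show "\<forall>a\<in>SIGMA A:Pow X. osp A \<times> osp (X - A).
          (\<lambda>(xs, k). (\<Union> (set (take k xs)), take k xs, drop k xs)) ((\<lambda>(A, xs1, xs2). (xs1 @ xs2, length xs1)) a) = a"
    by (auto simp: osp_def)
  show "\<forall>a'\<in>{(xs, k). xs \<in> osp X \<and> k \<le> length xs}.
          (\<lambda>(A, xs1, xs2). (xs1 @ xs2, length xs1)) ((\<lambda>(xs, k). (\<Union> (set (take k xs)), take k xs, drop k xs)) a') = a'"
    by auto
  show "(\<lambda>(A, xs1, xs2). (xs1 @ xs2, length xs1)) ` (SIGMA A:Pow X. osp A \<times> osp (X - A))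
          \<subseteq> {(xs, k). xs \<in> osp X \<and> k \<le> length xs}"
    using osp_append by auto
  show "(\<lambda>(xs, k). (\<Union> (set (take k xs)), take k xs, drop k xs)) ` {(xs, k). xs \<in> osp X \<and> k \<le> length xs}
          \<subseteq> (SIGMA A:Pow X. osp A \<times> osp (X - A))"
  proof clarsimp
    fix xs k assume xs: "xs \<in> osp X" and "k \<le> length xs"
    show "\<Union> (set (take k xs)) \<subseteq> X \<and> take k xs \<in> osp (\<Union> (set (take k xs))) \<and> drop k xs \<in> osp (X - \<Union> (set (take k xs)))"
      using osp_take_drop[OF xs] xs by (auto simp: osp_def dest: in_set_takeD)
  qed
qed

lemma split_sum:
  fixes g :: "'a set list \<Rightarrow> 'a set list \<Rightarrow> 'b::comm_monoid_add"
  assumes f: "finite X"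
  shows "(\<Sum>xs\<in>osp X. \<Sum>k\<in>{..length xs}. g (take k xs) (drop k xs))
       = (\<Sum>A\<in>Pow X. \<Sum>xs1\<in>osp A. \<Sum>xs2\<in>osp (X - A). g xs1 xs2)"
proof -
  have fA: "\<And>A. A \<in> Pow X \<Longrightarrow> finite A" using f by (auto intro: finite_subset)
  have "(\<Sum>A\<in>Pow X. \<Sum>xs1\<in>osp A. \<Sum>xs2\<in>osp (X - A). g xs1 xs2)
      = (\<Sum>A\<in>Pow X. \<Sum>(xs1,xs2)\<in>osp A \<times> osp (X - A). g xs1 xs2)"
    using f fA by (intro sum.cong refl, subst sum.cartesian_product) (auto intro!: finite_osp)
  also have "\<dots> = (\<Sum>(A,xs1,xs2)\<in>(SIGMA A:Pow X. osp A \<times> osp (X - A)). g xs1 xs2)"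
    using f fA by (subst sum.Sigma) (auto intro!: finite_osp finite_cartesian_product)
  also have "\<dots> = (\<Sum>(xs,k)\<in>{(xs, k). xs \<in> osp X \<and> k \<le> length xs}. g (take k xs) (drop k xs))"
    using sum.reindex_bij_betw[OF split_bij, of "\<lambda>(xs,k). g (take k xs) (drop k xs)" X]
    by (simp add: case_prod_beta)
  also have "{(xs, k). xs \<in> osp X \<and> k \<le> length xs} = (SIGMA xs:osp X. {..length xs})" by auto
  also have "(\<Sum>(xs,k)\<in>(SIGMA xs:osp X. {..length xs}). g (take k xs) (drop k xs))
      = (\<Sum>xs\<in>osp X. \<Sum>k\<in>{..length xs}. g (take k xs) (drop k xs))"
    using f by (subst sum.Sigma) (auto intro!: finite_osp)
  finally show ?thesis by simp
qed


lemma sum_osp_cons: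
  fixes f :: "'a set list \<Rightarrow> 'b::comm_monoid_add"
  assumes f: "finite X" and ne: "X \<noteq> {}"
  shows "(\<Sum>xs\<in>osp X. f xs) = (\<Sum>B\<in>Pow X - {{}}. \<Sum>ys\<in>osp (X - B). f (B # ys))"
proof -
  define g where "g = (\<lambda>xs1 xs2::'a set list. if length xs1 = 1 then f (xs1 @ xs2) else 0)"
  have "(\<Sum>xs\<in>osp X. f xs) = (\<Sum>xs\<in>osp X. \<Sum>k\<in>{..length xs}. g (take k xs) (drop k xs))"
  proof (rule sum.cong[OF refl])
    fix xs assume xs: "xs \<in> osp X"
    hence "xs \<noteq> []" using ne by auto
    hence "(\<Sum>k\<in>{..length xs}. g (take k xs) (drop k xs)) = (\<Sum>k\<in>{..length xs}. if k = 1 then f xs else 0)"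
      by (intro sum.cong refl) (auto simp: g_def min_def)
    also have "\<dots> = f xs" using \<open>xs \<noteq> []\<close> by (subst sum.delta) (auto simp: Suc_le_eq)
    finally show "f xs = (\<Sum>k\<in>{..length xs}. g (take k xs) (drop k xs))" by simp
  qed
  also have "\<dots> = (\<Sum>A\<in>Pow X. \<Sum>xs1\<in>osp A. \<Sum>xs2\<in>osp (X - A). g xs1 xs2)"
    by (rule split_sum[OF f])
  also have "\<dots> = (\<Sum>A\<in>Pow X. if A = {} then 0 else \<Sum>xs2\<in>osp (X - A). f (A # xs2))"
  proof (rule sum.cong[OF refl])
    fix A assume A: "A \<in> Pow X"
    have fA: "finite A" using A f by (auto intro: finite_subset)
    have "(\<Sum>xs1\<in>osp A. \<Sum>xs2\<in>osp (X - A). g xs1 xs2)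
        = (\<Sum>xs1\<in>osp A. if xs1 = [A] then \<Sum>xs2\<in>osp (X - A). f (A # xs2) else 0)"
    proof (rule sum.cong[OF refl])
      fix xs1 assume "xs1 \<in> osp A"
      hence "length xs1 = 1 \<longleftrightarrow> xs1 = [A]"
        by (cases xs1) (auto simp: osp_def)
      thus "(\<Sum>xs2\<in>osp (X - A). g xs1 xs2) = (if xs1 = [A] then \<Sum>xs2\<in>osp (X - A). f (A # xs2) else 0)"
        by (auto simp: g_def)
    qed
    also have "\<dots> = (if A = {} then 0 else \<Sum>xs2\<in>osp (X - A). f (A # xs2))"
    proof (cases "A = {}")
      case True thus ?thesis by simp
    next
      case False
      hence "[A] \<in> osp A" by (simp add: osp_def)
      thus ?thesis using fA False by (subst sum.delta) (auto simp: finite_osp)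
    qed
    finally show "(\<Sum>xs1\<in>osp A. \<Sum>xs2\<in>osp (X - A). g xs1 xs2) = \<dots>" .
  qed
  also have "\<dots> = (\<Sum>B\<in>Pow X - {{}}. \<Sum>ys\<in>osp (X - B). f (B # ys))"
    using f by (subst sum.remove[of _ "{}"]) auto
  finally show ?thesis .
qed

lemma sum_osp_snoc:
  fixes f :: "'a set list \<Rightarrow> 'b::comm_monoid_add"
  assumes f: "finite X" and ne: "X \<noteq> {}"
  shows "(\<Sum>xs\<in>osp X. f xs) = (\<Sum>B\<in>Pow X - {{}}. \<Sum>ys\<in>osp (X - B). f (ys @ [B]))"
proof -
  define g where "g = (\<lambda>xs1 xs2::'a set list. if length xs2 = 1 then f (xs1 @ xs2) else 0)"
  have "(\<Sum>xs\<in>osp X. f xs) = (\<Sum>xs\<in>osp X. \<Sum>k\<in>{..length xs}. g (take k xs) (drop k xs))"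
  proof (rule sum.cong[OF refl])
    fix xs assume xs: "xs \<in> osp X"
    hence "xs \<noteq> []" using ne by auto
    hence kk: "\<And>k. k \<le> length xs \<Longrightarrow> (length (drop k xs) = 1) = (k = length xs - 1)" by (cases xs) auto
    hence "(\<Sum>k\<in>{..length xs}. g (take k xs) (drop k xs)) = (\<Sum>k\<in>{..length xs}. if k = length xs - 1 then f xs else 0)"
      by (intro sum.cong refl) (simp add: g_def)
    also have "\<dots> = f xs" using \<open>xs \<noteq> []\<close> by (subst sum.delta) auto
    finally show "f xs = (\<Sum>k\<in>{..length xs}. g (take k xs) (drop k xs))" by simp
  qed
  also have "\<dots> = (\<Sum>A\<in>Pow X. \<Sum>xs1\<in>osp A. \<Sum>xs2\<in>osp (X - A). g xs1 xs2)"
    by (rule split_sum[OF f])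
  also have "\<dots> = (\<Sum>A\<in>Pow X. \<Sum>xs1\<in>osp A. if X - A = {} then 0 else f (xs1 @ [X - A]))"
  proof (intro sum.cong refl)
    fix A xs1 assume A: "A \<in> Pow X"
    have fA: "finite (X - A)" using f by auto
    have "(\<Sum>xs2\<in>osp (X - A). g xs1 xs2) = (\<Sum>xs2\<in>osp (X - A). if xs2 = [X - A] then f (xs1 @ [X - A]) else 0)"
    proof (rule sum.cong[OF refl])
      fix xs2 assume "xs2 \<in> osp (X - A)"
      hence "length xs2 = 1 \<longleftrightarrow> xs2 = [X - A]"
        by (cases xs2) (auto simp: osp_def)
      thus "g xs1 xs2 = (if xs2 = [X - A] then f (xs1 @ [X - A]) else 0)"
        by (auto simp: g_def)
    qed
    also have "\<dots> = (if X - A = {} then 0 else f (xs1 @ [X - A]))"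
    proof (cases "X - A = {}")
      case True thus ?thesis unfolding True by simp
    next
      case False
      hence "[X - A] \<in> osp (X - A)" by (simp add: osp_def)
      thus ?thesis using fA False by (subst sum.delta) (auto simp: finite_osp)
    qed
    finally show "(\<Sum>xs2\<in>osp (X - A). g xs1 xs2) = \<dots>" .
  qed
  also have "\<dots> = (\<Sum>B\<in>Pow X. if B = {} then 0 else \<Sum>ys\<in>osp (X - B). f (ys @ [B]))"
  proof -
    have b: "bij_betw (\<lambda>A. X - A) (Pow X) (Pow X)"
      by (rule bij_betw_byWitness[where f'="\<lambda>A. X - A"]) auto
    have "(\<Sum>B\<in>Pow X. if B = {} then 0 else \<Sum>ys\<in>osp (X - B). f (ys @ [B]))
        = (\<Sum>A\<in>Pow X. if X - A = {} then 0 else \<Sum>ys\<in>osp (X - (X - A)). f (ys @ [X - A]))"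
      by (rule sum.reindex_bij_betw[OF b, symmetric])
    also have "\<dots> = (\<Sum>A\<in>Pow X. \<Sum>xs1\<in>osp A. if X - A = {} then 0 else f (xs1 @ [X - A]))"
      by (intro sum.cong refl) (auto simp: double_diff)
    finally show ?thesis by simp
  qed
  also have "\<dots> = (\<Sum>B\<in>Pow X - {{}}. \<Sum>ys\<in>osp (X - B). f (ys @ [B]))"
    using f by (subst sum.remove[of _ "{}"]) auto
  finally show ?thesis .
qed

fun bwd :: "('a \<times> 'a) set \<Rightarrow> 'a set list \<Rightarrow> bool" where
  "bwd R [] = True"
| "bwd R (B # xs) = ((\<forall>u\<in>B. \<forall>v\<in>B \<union> \<Union>(set xs). (u, v) \<notin> R) \<and> bwd R xs)"

fun wbwd :: "('a \<times> 'a) set \<Rightarrow> 'a set list \<Rightarrow> bool" where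
  "wbwd R [] = True"
| "wbwd R (B # xs) = ((\<forall>u\<in>B. \<forall>v\<in>\<Union>(set xs). (u, v) \<notin> R) \<and> wbwd R xs)"

definition rootedB :: "('a \<times> 'a) set \<Rightarrow> 'a set \<Rightarrow> bool" where
  "rootedB R B = (\<exists>r\<in>B. \<forall>x\<in>B. (x, r) \<in> (R \<inter> B \<times> B)\<^sup>*)"

definition rooted :: "('a \<times> 'a) set \<Rightarrow> 'a set list \<Rightarrow> bool" where
  "rooted R xs = (\<forall>B\<in>set xs. rootedB R B)"

lemma bwd_append: "bwd R (xs @ ys) = (bwd R xs \<and> bwd R ys \<and> (\<forall>u\<in>\<Union>(set xs). \<forall>v\<in>\<Union>(set ys). (u, v) \<notin> R))"
proof (induction xs)
  case (Cons a xs) show ?case using Cons.IH by (simp only: append_Cons bwd.simps set_append Union_Un_distrib list.set Union_insert) blast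
qed simp
lemma wbwd_append: "wbwd R (xs @ ys) = (wbwd R xs \<and> wbwd R ys \<and> (\<forall>u\<in>\<Union>(set xs). \<forall>v\<in>\<Union>(set ys). (u, v) \<notin> R))"
proof (induction xs)
  case (Cons a xs) show ?case using Cons.IH by (simp only: append_Cons wbwd.simps set_append Union_Un_distrib list.set Union_insert) blast
qed simp
lemma rooted_append: "rooted R (xs @ ys) = (rooted R xs \<and> rooted R ys)"
  by (auto simp: rooted_def)

lemma sinks_ne:
  assumes "finite X" "X \<noteq> {}" "acyclic R"
  shows "\<exists>u\<in>X. \<forall>v\<in>X. (u, v) \<notin> R"
proof -
  let ?R = "R \<inter> X \<times> X"
  have "finite ?R" using assms(1) by auto
  moreover have "acyclic ?R" using assms(3) acyclic_subset by blast
  ultimately have "wf (?R\<inverse>)" by (rule finite_acyclic_wf_converse)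
  note wf = this
  obtain x where x: "x \<in> X" using assms(2) by auto
  obtain u where "u \<in> X" "\<And>v. (v, u) \<in> ?R\<inverse> \<Longrightarrow> v \<notin> X"
    using wfE_min[OF wf x] by blast
  show ?thesis
  proof (intro bexI[of _ u] ballI notI)
    fix v assume "v \<in> X" "(u, v) \<in> R"
    hence "(v, u) \<in> ?R\<inverse>" using \<open>u \<in> X\<close> by auto
    thus False using \<open>v \<in> X\<close> \<open>\<And>v. (v, u) \<in> ?R\<inverse> \<Longrightarrow> v \<notin> X\<close> by blast
  qed (rule \<open>u \<in> X\<close>)
qed

lemma alt_sum:
  assumes "finite S" "S \<noteq> {}"
  shows "(\<Sum>B\<in>Pow S - {{}}. (-1::int) ^ (card B - 1)) = 1"
proof -
  have "(\<Prod>x\<in>S. (1::int) - 1) = (\<Sum>X\<in>Pow S. (- 1) ^ card X * prod (\<lambda>_. 1) X * prod (\<lambda>_. 1) (S - X))"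
    by (rule prod_diff_conv_sum[OF assms(1)])
  moreover have "card S > 0" using assms by auto
  ultimately have z: "(\<Sum>X\<in>Pow S. (-1::int) ^ card X) = 0" by (simp add: zero_power)
  have "(\<Sum>X\<in>Pow S. (-1::int) ^ card X) = 1 + (\<Sum>B\<in>Pow S - {{}}. (-1::int) ^ card B)"
    using assms(1) by (subst sum.remove[of _ "{}"]) auto
  also have "(\<Sum>B\<in>Pow S - {{}}. (-1::int) ^ card B) = - (\<Sum>B\<in>Pow S - {{}}. (-1::int) ^ (card B - 1))"
  proof -
    have "\<And>B. B \<in> Pow S - {{}} \<Longrightarrow> (-1::int) ^ card B = - ((-1) ^ (card B - 1))"
    proof -
      fix B assume "B \<in> Pow S - {{}}"
      hence "card B \<noteq> 0" using assms(1) finite_subset by fastforce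
      then obtain m where "card B = Suc m" by (cases "card B") auto
      thus "(-1::int) ^ card B = - ((-1) ^ (card B - 1))" by simp
    qed
    thus ?thesis by (simp add: sum_negf)
  qed
  finally show ?thesis using z by simp
qed

lemma recip:
  assumes "finite X" "acyclic R"
  shows "(\<Sum>xs\<in>osp X. if bwd R xs then (-1::int) ^ (card X - length xs) else 0) = 1"
  using assms(1)
proof (induction X rule: finite_psubset_induct)
  case (psubset X)
  show ?case
  proof (cases "X = {}")
    case True thus ?thesis by simp
  next
    case ne: False
    define S where "S = {u\<in>X. \<forall>v\<in>X. (u, v) \<notin> R}"
    have S: "finite S" "S \<noteq> {}" "S \<subseteq> X" using sinks_ne[OF psubset.hyps ne assms(2)] psubset.hyps
      by (auto simp: S_def)
    have "(\<Sum>xs\<in>osp X. if bwd R xs then (-1::int) ^ (card X - length xs) else 0)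
        = (\<Sum>B\<in>Pow X - {{}}. \<Sum>ys\<in>osp (X - B). if bwd R (B # ys) then (-1::int) ^ (card X - length (B # ys)) else 0)"
      by (rule sum_osp_cons[OF psubset.hyps ne])
    also have "\<dots> = (\<Sum>B\<in>Pow X - {{}}. if B \<subseteq> S then (-1::int) ^ (card B - 1) else 0)"
    proof (rule sum.cong[OF refl])
      fix B assume B: "B \<in> Pow X - {{}}"
      have fB: "finite B" "finite (X - B)" using B psubset.hyps by (auto intro: finite_subset)
      have cB: "card B \<ge> 1" using B fB by (auto simp: Suc_le_eq card_gt_0_iff)
      have cX: "card X = card B + card (X - B)" using B fB
        by (metis Diff_partition PowD DiffD1 card_Un_disjoint Diff_disjoint)
      have psub: "X - B \<subset> X" using B by auto
      have "(\<Sum>ys\<in>osp (X - B). if bwd R (B # ys) then (-1::int) ^ (card X - length (B # ys)) else 0)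
          = (\<Sum>ys\<in>osp (X - B). if B \<subseteq> S then (-1::int) ^ (card B - 1) * (if bwd R ys then (-1) ^ (card (X - B) - length ys) else 0) else 0)"
      proof (rule sum.cong[OF refl])
        fix ys assume ys: "ys \<in> osp (X - B)"
        have u: "B \<union> \<Union>(set ys) = X" using ys B by (auto simp: osp_def)
        have l: "length ys \<le> card (X - B)" by (rule osp_len[OF fB(2) ys])
        have e: "card X - length (B # ys) = (card B - 1) + (card (X - B) - length ys)"
          using cB cX l by simp
        have bk: "bwd R (B # ys) = (B \<subseteq> S \<and> bwd R ys)"
          using u B by (auto simp: S_def)
        show "(if bwd R (B # ys) then (-1::int) ^ (card X - length (B # ys)) else 0)
            = (if B \<subseteq> S then (-1::int) ^ (card B - 1) * (if bwd R ys then (-1) ^ (card (X - B) - length ys) else 0) else 0)"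
          unfolding bk e by (simp add: power_add)
      qed
      also have "\<dots> = (if B \<subseteq> S then (-1::int) ^ (card B - 1) * (\<Sum>ys\<in>osp (X - B). if bwd R ys then (-1) ^ (card (X - B) - length ys) else 0) else 0)"
        by (simp add: sum_distrib_left)
      also have "\<dots> = (if B \<subseteq> S then (-1::int) ^ (card B - 1) else 0)"
        using psubset.IH[OF psub] by simp
      finally show "(\<Sum>ys\<in>osp (X - B). if bwd R (B # ys) then (-1::int) ^ (card X - length (B # ys)) else 0) = \<dots>" .
    qed
    also have "\<dots> = (\<Sum>B\<in>Pow S - {{}}. (-1::int) ^ (card B - 1))"
    proof -
      have "Pow S - {{}} \<subseteq> Pow X - {{}}" using S by auto
      moreover have "finite (Pow X - {{}})" using psubset.hyps by auto
      ultimately show ?thesis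
        by (subst sum.mono_neutral_cong_right[of "Pow X - {{}}" "Pow S - {{}}"]) auto
    qed
    also have "\<dots> = 1" by (rule alt_sum[OF S(1,2)])
    finally show ?thesis .
  qed
qed


lemma psum_snoc_le: "k \<le> length g \<Longrightarrow> psum (g @ [m]) k = psum g k"
  by (simp add: psum_def)

lemma pi_comp_snoc: "pi_comp (g @ [m]) = pi_comp g * (sum_list g + m)"
proof -
  have "pi_comp (g @ [m]) = (\<Prod>i<Suc (length g). psum (g @ [m]) (Suc i))" by (simp add: pi_comp_def)
  also have "\<dots> = (\<Prod>i<length g. psum (g @ [m]) (Suc i)) * psum (g @ [m]) (Suc (length g))"
    by (rule prod.lessThan_Suc)
  also have "(\<Prod>i<length g. psum (g @ [m]) (Suc i)) = pi_comp g"
    unfolding pi_comp_def by (intro prod.cong refl) (simp add: psum_snoc_le)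
  also have "psum (g @ [m]) (Suc (length g)) = sum_list g + m" by (simp add: psum_def)
  finally show ?thesis .
qed

definition anc :: "('a \<times> 'a) set \<Rightarrow> 'a set \<Rightarrow> 'a \<Rightarrow> 'a set" where
  "anc R X r = {x\<in>X. (x, r) \<in> (R \<inter> X \<times> X)\<^sup>*}"

lemma anc_rooted:
  assumes "r \<in> X"
  shows "rootedB R (anc R X r)" "\<forall>u\<in>X - anc R X r. \<forall>v\<in>anc R X r. (u, v) \<notin> R"
    "anc R X r \<noteq> {}" "anc R X r \<subseteq> X"
proof -
  let ?B = "anc R X r"
  have rB: "r \<in> ?B" using assms by (simp add: anc_def)
  have "\<And>x. (x, r) \<in> (R \<inter> X \<times> X)\<^sup>* \<Longrightarrow> (x, r) \<in> (R \<inter> ?B \<times> ?B)\<^sup>*"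
  proof -
    fix x assume "(x, r) \<in> (R \<inter> X \<times> X)\<^sup>*"
    thus "(x, r) \<in> (R \<inter> ?B \<times> ?B)\<^sup>*"
    proof (induction rule: converse_rtrancl_induct)
      case base thus ?case by simp
    next
      case (step x y)
      have "x \<in> ?B" using step(1,2) by (auto simp: anc_def intro: converse_rtrancl_into_rtrancl)
      moreover have "y \<in> ?B" using step(1,2) by (auto simp: anc_def)
      ultimately show ?case using step by (auto intro: converse_rtrancl_into_rtrancl)
    qed
  qed
  thus "rootedB R ?B" using rB unfolding rootedB_def by (auto simp: anc_def)
  show "\<forall>u\<in>X - ?B. \<forall>v\<in>?B. (u, v) \<notin> R"
    by (auto simp: anc_def intro: converse_rtrancl_into_rtrancl)
  show "?B \<noteq> {}" using rB by auto
  show "?B \<subseteq> X" by (auto simp: anc_def)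
qed

lemma rooted_anc:
  assumes "B \<subseteq> X" "\<forall>u\<in>X - B. \<forall>v\<in>B. (u, v) \<notin> R" "rootedB R B"
  shows "\<exists>r\<in>X. B = anc R X r"
proof -
  obtain r where r: "r \<in> B" "\<forall>x\<in>B. (x, r) \<in> (R \<inter> B \<times> B)\<^sup>*" using assms(3) by (auto simp: rootedB_def)
  have "B = anc R X r"
  proof
    show "B \<subseteq> anc R X r"
    proof
      fix x assume "x \<in> B"
      hence "(x, r) \<in> (R \<inter> B \<times> B)\<^sup>*" using r by auto
      moreover have "R \<inter> B \<times> B \<subseteq> R \<inter> X \<times> X" using assms(1) by auto
      ultimately have "(x, r) \<in> (R \<inter> X \<times> X)\<^sup>*" using rtrancl_mono by blast
      thus "x \<in> anc R X r" using \<open>x \<in> B\<close> assms(1) by (auto simp: anc_def)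
    qed
    show "anc R X r \<subseteq> B"
    proof
      fix x assume "x \<in> anc R X r"
      hence "(x, r) \<in> (R \<inter> X \<times> X)\<^sup>*" by (simp add: anc_def)
      thus "x \<in> B"
      proof (induction rule: converse_rtrancl_induct)
        case base thus ?case using r by simp
      next
        case (step x y)
        thus ?case using assms(2) by blast
      qed
    qed
  qed
  thus ?thesis using r assms(1) by auto
qed

lemma anc_inj:
  assumes "acyclic R"
  shows "inj_on (anc R X) X"
proof
  fix r r' assume rr: "r \<in> X" "r' \<in> X" "anc R X r = anc R X r'"
  hence "r \<in> anc R X r'" "r' \<in> anc R X r" by (auto simp: anc_def)
  hence "(r, r') \<in> (R \<inter> X \<times> X)\<^sup>*" "(r', r) \<in> (R \<inter> X \<times> X)\<^sup>*" by (auto simp: anc_def)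
  hence a: "(r, r') \<in> R\<^sup>*" "(r', r) \<in> R\<^sup>*" using rtrancl_mono[of "R \<inter> X \<times> X" R] by auto
  show "r = r'"
  proof (rule ccontr)
    assume "r \<noteq> r'"
    hence "(r, r') \<in> R\<^sup>+" using a(1) by (simp add: rtrancl_eq_or_trancl)
    hence "(r, r) \<in> R\<^sup>+" using a(2) by (rule trancl_rtrancl_trancl)
    thus False using assms by (simp add: acyclic_def)
  qed
qed

lemma rootsum:
  assumes "finite X" "acyclic R"
  shows "(\<Sum>xs\<in>osp X. if wbwd R xs \<and> rooted R xs then 1 / of_nat (pi_comp (map card xs)) else (0::rat)) = 1"
  using assms(1)
proof (induction X rule: finite_psubset_induct)
  case (psubset X)
  show ?case
  proof (cases "X = {}")
    case True thus ?thesis by (simp add: pi_comp_def rooted_def)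
  next
    case ne: False
    let ?C = "\<lambda>B. (\<forall>u\<in>X - B. \<forall>v\<in>B. (u, v) \<notin> R) \<and> rootedB R B"
    have "(\<Sum>xs\<in>osp X. if wbwd R xs \<and> rooted R xs then 1 / of_nat (pi_comp (map card xs)) else (0::rat))
        = (\<Sum>B\<in>Pow X - {{}}. \<Sum>ys\<in>osp (X - B). if wbwd R (ys @ [B]) \<and> rooted R (ys @ [B]) then 1 / of_nat (pi_comp (map card (ys @ [B]))) else (0::rat))"
      by (rule sum_osp_snoc[OF psubset.hyps ne])
    also have "\<dots> = (\<Sum>B\<in>Pow X - {{}}. if ?C B then 1 / of_nat (card X) else 0)"
    proof (rule sum.cong[OF refl])
      fix B assume B: "B \<in> Pow X - {{}}"
      have fB: "finite B" "finite (X - B)" using B psubset.hyps by (auto intro: finite_subset)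
      have cX: "card X = card (X - B) + card B" using B fB
        by (metis Diff_partition PowD DiffD1 card_Un_disjoint Diff_disjoint add.commute)
      have psub: "X - B \<subset> X" using B by auto
      have "(\<Sum>ys\<in>osp (X - B). if wbwd R (ys @ [B]) \<and> rooted R (ys @ [B]) then 1 / of_nat (pi_comp (map card (ys @ [B]))) else (0::rat))
          = (\<Sum>ys\<in>osp (X - B). if ?C B then (1 / of_nat (card X)) * (if wbwd R ys \<and> rooted R ys then 1 / of_nat (pi_comp (map card ys)) else 0) else 0)"
      proof (rule sum.cong[OF refl])
        fix ys assume ys: "ys \<in> osp (X - B)"
        have u: "\<Union>(set ys) = X - B" using ys by (auto simp: osp_def)
        have pc: "pi_comp (map card (ys @ [B])) = pi_comp (map card ys) * card X"
          using pi_comp_snoc[of "map card ys" "card B"] osp_card_sum[OF fB(2) ys] cX by simp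
        have w: "(wbwd R (ys @ [B]) \<and> rooted R (ys @ [B])) = (?C B \<and> wbwd R ys \<and> rooted R ys)"
          using u by (auto simp: wbwd_append rooted_append rooted_def)
        show "(if wbwd R (ys @ [B]) \<and> rooted R (ys @ [B]) then 1 / of_nat (pi_comp (map card (ys @ [B]))) else (0::rat))
           = (if ?C B then (1 / of_nat (card X)) * (if wbwd R ys \<and> rooted R ys then 1 / of_nat (pi_comp (map card ys)) else 0) else 0)"
          unfolding w pc by simp
      qed
      also have "\<dots> = (if ?C B then (1 / of_nat (card X)) * (\<Sum>ys\<in>osp (X - B). if wbwd R ys \<and> rooted R ys then 1 / of_nat (pi_comp (map card ys)) else 0) else 0)"
      proof (cases "?C B")
        case True thus ?thesis by (simp add: sum_distrib_left)
      next
        case False thus ?thesis by (simp only: if_not_P[OF False] if_False sum.neutral_const)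
      qed
      also have "\<dots> = (if ?C B then 1 / of_nat (card X) else 0)"
        using psubset.IH[OF psub] by simp
      finally show "(\<Sum>ys\<in>osp (X - B). if wbwd R (ys @ [B]) \<and> rooted R (ys @ [B]) then 1 / of_nat (pi_comp (map card (ys @ [B]))) else (0::rat)) = \<dots>" .
    qed
    also have "\<dots> = (\<Sum>B\<in>anc R X ` X. 1 / of_nat (card X))"
    proof -
      have sub: "anc R X ` X \<subseteq> Pow X - {{}}"
      proof
        fix B assume "B \<in> anc R X ` X"
        then obtain r where "r \<in> X" "B = anc R X r" by blast
        thus "B \<in> Pow X - {{}}" using anc_rooted(3,4)[of r X R] by blast
      qed
      have "\<And>B. B \<in> Pow X - {{}} \<Longrightarrow> ?C B = (B \<in> anc R X ` X)"
      proof
        fix B assume "B \<in> Pow X - {{}}" "?C B"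
        thus "B \<in> anc R X ` X" using rooted_anc[of B X R] by blast
      next
        fix B assume "B \<in> anc R X ` X"
        then obtain r where "r \<in> X" "B = anc R X r" by blast
        thus "?C B" using anc_rooted(1,2)[of r X R] by blast
      qed
      hence "(\<Sum>B\<in>Pow X - {{}}. if ?C B then 1 / of_nat (card X) else (0::rat))
          = (\<Sum>B\<in>Pow X - {{}}. if B \<in> anc R X ` X then 1 / of_nat (card X) else 0)"
        by (intro sum.cong) auto
      also have "\<dots> = (\<Sum>B\<in>anc R X ` X. 1 / of_nat (card X))"
        using sub psubset.hyps by (subst sum.inter_restrict[symmetric]) (auto simp: Int_absorb1)
      finally show ?thesis .
    qed
    also have "\<dots> = of_nat (card X) * (1 / of_nat (card X))"
      using card_image[OF anc_inj[OF assms(2), of X]] by simp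
    also have "\<dots> = 1" using ne psubset.hyps by simp
    finally show ?thesis .
  qed
qed


fun refines :: "nat list \<Rightarrow> nat list \<Rightarrow> bool" where
  "refines g [] = (g = [])"
| "refines g (b # bs) = (\<exists>k. 0 < k \<and> k \<le> length g \<and> sum_list (take k g) = b \<and> refines (drop k g) bs)"

lemma sum_take_mono: "k \<le> k' \<Longrightarrow> sum_list (take k (g::nat list)) \<le> sum_list (take k' g)"
proof -
  assume "k \<le> k'"
  then obtain m where "k' = k + m" using le_Suc_ex by blast
  thus ?thesis by (simp add: take_add)
qed

lemma sum_take_strict:
  assumes pos: "\<forall>x\<in>set g. (0::nat) < x" and "k < k'" "k' \<le> length g"
  shows "sum_list (take k g) < sum_list (take k' g)"
proof -
  have "k < length g" using assms by simp
  hence "sum_list (take (Suc k) g) = sum_list (take k g) + g ! k"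
    by (simp add: take_Suc_conv_app_nth)
  moreover have "g ! k > 0" using pos \<open>k < length g\<close> by simp
  moreover have "sum_list (take (Suc k) g) \<le> sum_list (take k' g)" using assms by (intro sum_take_mono) simp
  ultimately show ?thesis by simp
qed

lemma sum_take_inj:
  assumes pos: "\<forall>x\<in>set g. (0::nat) < x" and "k \<le> length g" "k' \<le> length g"
    and "sum_list (take k g) = sum_list (take k' g)"
  shows "k = k'"
  using sum_take_strict[OF pos, of k k'] sum_take_strict[OF pos, of k' k] assms by (cases "k < k'"; cases "k' < k") auto

lemma sum_if_unique:
  assumes "finite K" "\<And>k k'. k \<in> K \<Longrightarrow> k' \<in> K \<Longrightarrow> C k \<Longrightarrow> C k' \<Longrightarrow> k = k'"
  shows "(\<Sum>k\<in>K. if C k then a else 0) = (if \<exists>k\<in>K. C k then a else (0::'b::comm_monoid_add))"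
proof (cases "\<exists>k\<in>K. C k")
  case True
  then obtain k0 where k0: "k0 \<in> K" "C k0" by blast
  have "(\<Sum>k\<in>K. if C k then a else 0) = (\<Sum>k\<in>K. if k = k0 then a else 0)"
    using assms(2) k0 by (intro sum.cong) auto
  also have "\<dots> = a" using assms(1) k0 by simp
  finally show ?thesis using True by simp
next
  case False thus ?thesis by (auto intro: sum.neutral)
qed

lemma osp_pos: "finite X \<Longrightarrow> xs \<in> osp X \<Longrightarrow> \<forall>x\<in>set (map card xs). 0 < x"
  by (auto simp: osp_def card_gt_0_iff intro: finite_subset)

lemma group_split:
  fixes \<Phi> :: "nat set list \<Rightarrow> 'b::comm_monoid_add"
  assumes f: "finite X"
  shows "(\<Sum>xs\<in>osp X. if refines (map card xs) (b # bs) then \<Phi> xs else 0)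
       = (\<Sum>A\<in>Pow X. \<Sum>xs1\<in>osp A. \<Sum>xs2\<in>osp (X - A).
            if xs1 \<noteq> [] \<and> card A = b \<and> refines (map card xs2) bs then \<Phi> (xs1 @ xs2) else 0)"
proof -
  define g where "g = (\<lambda>xs1 xs2. if xs1 \<noteq> [] \<and> sum_list (map card xs1) = b \<and> refines (map card xs2) bs then \<Phi> (xs1 @ xs2) else 0)"
  have "(\<Sum>xs\<in>osp X. if refines (map card xs) (b # bs) then \<Phi> xs else 0)
      = (\<Sum>xs\<in>osp X. \<Sum>k\<in>{..length xs}. g (take k xs) (drop k xs))"
  proof (rule sum.cong[OF refl])
    fix xs assume xs: "xs \<in> osp X"
    have pos: "\<forall>x\<in>set (map card xs). 0 < x" by (rule osp_pos[OF f xs])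
    let ?C = "\<lambda>k. 0 < k \<and> sum_list (take k (map card xs)) = b \<and> refines (drop k (map card xs)) bs"
    have "(\<Sum>k\<in>{..length xs}. g (take k xs) (drop k xs)) = (\<Sum>k\<in>{..length xs}. if ?C k then \<Phi> xs else 0)"
      by (intro sum.cong refl) (auto simp: g_def take_map drop_map)
    also have "\<dots> = (if \<exists>k\<in>{..length xs}. ?C k then \<Phi> xs else 0)"
      by (rule sum_if_unique) (use sum_take_inj[OF pos] in auto)
    also have "(\<exists>k\<in>{..length xs}. ?C k) = refines (map card xs) (b # bs)" by auto
    finally show "(if refines (map card xs) (b # bs) then \<Phi> xs else 0) = (\<Sum>k\<in>{..length xs}. g (take k xs) (drop k xs))" by simp
  qed
  also have "\<dots> = (\<Sum>A\<in>Pow X. \<Sum>xs1\<in>osp A. \<Sum>xs2\<in>osp (X - A). g xs1 xs2)"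
    by (rule split_sum[OF f])
  also have "\<dots> = (\<Sum>A\<in>Pow X. \<Sum>xs1\<in>osp A. \<Sum>xs2\<in>osp (X - A).
            if xs1 \<noteq> [] \<and> card A = b \<and> refines (map card xs2) bs then \<Phi> (xs1 @ xs2) else 0)"
  proof (intro sum.cong refl)
    fix A xs1 xs2 assume "A \<in> Pow X" "xs1 \<in> osp A"
    hence "sum_list (map card xs1) = card A" using f by (intro osp_card_sum) (auto intro: finite_subset)
    thus "g xs1 xs2 = (if xs1 \<noteq> [] \<and> card A = b \<and> refines (map card xs2) bs then \<Phi> (xs1 @ xs2) else 0)"
      by (simp add: g_def)
  qed
  finally show ?thesis .
qed


lemma psum_append_le: "k \<le> length g1 \<Longrightarrow> psum (g1 @ g2) k = psum g1 k"
  by (simp add: psum_def)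

lemma psum_append_ge: "psum (g1 @ g2) (length g1 + k) = sum_list g1 + psum g2 k"
  by (simp add: psum_def)

lemma psum_lt_sum:
  assumes "\<forall>x\<in>set g. (0::nat) < x" "k < length g"
  shows "psum g k < sum_list g"
  using sum_take_strict[OF assms(1), of k "length g"] assms by (simp add: psum_def)

lemma psum_le_sum: "psum g k \<le> sum_list (g::nat list)"
  using sum_take_mono[of k "length g" g] by (cases "k \<le> length g") (auto simp: psum_def)

lemma psum_Suc_pos:
  assumes "\<forall>x\<in>set g. (0::nat) < x" "k < length g"
  shows "0 < psum g (Suc k)"
proof -
  have "psum g (Suc k) = psum g k + g ! k" using assms(2) by (simp add: psum_def take_Suc_conv_app_nth)
  thus ?thesis using assms by simp
qed

lemma subcomp_split:
  fixes g1 g2 :: "nat list"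
  defines "P \<equiv> \<lambda>a c i k. psum c i \<le> psum a k \<and> psum a (Suc k) \<le> psum c (Suc i)"
  shows "subcomp a c i = map (nth a) (filter (P a c i) [0..<length a])"
  by (simp add: subcomp_def P_def)

lemma subcomp_cons:
  assumes p1: "\<forall>x\<in>set g1. (0::nat) < x" and p2: "\<forall>x\<in>set g2. (0::nat) < x" and s: "sum_list g1 = b"
  shows "subcomp (g1 @ g2) (b # bs) 0 = g1" "subcomp (g1 @ g2) (b # bs) (Suc i) = subcomp g2 bs i"
proof -
  let ?a = "g1 @ g2" and ?c = "b # bs"
  let ?P = "\<lambda>i k. psum ?c i \<le> psum ?a k \<and> psum ?a (Suc k) \<le> psum ?c (Suc i)"
  have upt: "[0..<length ?a] = [0..<length g1] @ map (\<lambda>k. length g1 + k) [0..<length g2]"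
  proof -
    have "map (\<lambda>k. length g1 + k) [0..<length g2] = [length g1..<length g1 + length g2]"
      by (rule nth_equalityI) auto
    thus ?thesis using upt_add_eq_append[of 0 "length g1" "length g2"] by simp
  qed
  have a1: "\<And>k. k < length g1 \<Longrightarrow> psum ?a k = psum g1 k \<and> psum ?a (Suc k) = psum g1 (Suc k) \<and> ?a ! k = g1 ! k"
    by (simp add: psum_append_le nth_append)
  have a2: "psum ?a (length g1 + k) = b + psum g2 k \<and> psum ?a (Suc (length g1 + k)) = b + psum g2 (Suc k)
       \<and> ?a ! (length g1 + k) = g2 ! k" for k
    using psum_append_ge[of g1 g2 k] psum_append_ge[of g1 g2 "Suc k"] s by simp
  have c0: "psum ?c 0 = 0" "psum ?c (Suc 0) = b" by (simp_all add: psum_def)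
  have cS: "\<And>i. psum ?c (Suc i) = b + psum bs i" by (simp add: psum_def)
  show "subcomp ?a ?c 0 = g1"
  proof -
    have "filter (?P 0) [0..<length g1] = [0..<length g1]"
      using a1 c0 s psum_le_sum[of g1] by (intro filter_True) auto
    moreover have "filter (?P 0) (map (\<lambda>k. length g1 + k) [0..<length g2]) = []"
    proof -
      have "\<And>k. k < length g2 \<Longrightarrow> \<not> ?P 0 (length g1 + k)"
      proof
        fix k assume k: "k < length g2" "?P 0 (length g1 + k)"
        have "0 < psum g2 (Suc k)" by (rule psum_Suc_pos[OF p2 k(1)])
        thus False using k(2) a2[of k] c0 by simp
      qed
      hence "filter (\<lambda>k. ?P 0 (length g1 + k)) [0..<length g2] = []" by (intro filter_False) auto
      thus ?thesis by (simp add: filter_map o_def)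
    qed
    ultimately have "filter (?P 0) [0..<length ?a] = [0..<length g1]" by (simp only: upt filter_append) simp
    hence "subcomp ?a ?c 0 = map (nth ?a) [0..<length g1]" by (simp add: subcomp_def)
    also have "\<dots> = map (nth g1) [0..<length g1]" by (intro map_cong refl) (simp add: nth_append)
    also have "\<dots> = g1" by (rule map_nth)
    finally show ?thesis .
  qed
  show "subcomp ?a ?c (Suc i) = subcomp g2 bs i"
  proof -
    have "filter (?P (Suc i)) [0..<length g1] = []"
    proof -
      have "\<And>k. k < length g1 \<Longrightarrow> \<not> ?P (Suc i) k"
      proof
        fix k assume k: "k < length g1" "?P (Suc i) k"
        have "psum g1 k < b" using psum_lt_sum[OF p1 k(1)] s by simp
        thus False using k(2) a1[OF k(1)] cS[of i] by simp
      qed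
      thus ?thesis by (intro filter_False) auto
    qed
    moreover have "filter (?P (Suc i)) (map (\<lambda>k. length g1 + k) [0..<length g2])
        = map (\<lambda>k. length g1 + k) (filter (\<lambda>k. psum bs i \<le> psum g2 k \<and> psum g2 (Suc k) \<le> psum bs (Suc i)) [0..<length g2])"
      by (simp add: filter_map o_def a2 cS)
    ultimately have "filter (?P (Suc i)) [0..<length ?a]
        = map (\<lambda>k. length g1 + k) (filter (\<lambda>k. psum bs i \<le> psum g2 k \<and> psum g2 (Suc k) \<le> psum bs (Suc i)) [0..<length g2])"
      by (simp only: upt filter_append) simp
    thus ?thesis by (simp add: subcomp_def a2)
  qed
qed

lemma pi_pair_cons:
  assumes p1: "\<forall>x\<in>set g1. (0::nat) < x" and p2: "\<forall>x\<in>set g2. (0::nat) < x" and s: "sum_list g1 = b"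
  shows "pi_pair (g1 @ g2) (b # bs) = pi_comp g1 * pi_pair g2 bs"
proof -
  have "pi_pair (g1 @ g2) (b # bs) = (\<Prod>i<Suc (length bs). pi_comp (subcomp (g1 @ g2) (b # bs) i))"
    by (simp add: pi_pair_def)
  also have "\<dots> = pi_comp (subcomp (g1 @ g2) (b # bs) 0) * (\<Prod>i<length bs. pi_comp (subcomp (g1 @ g2) (b # bs) (Suc i)))"
    by (rule prod.lessThan_Suc_shift)
  also have "\<dots> = pi_comp g1 * pi_pair g2 bs"
    using subcomp_cons[OF p1 p2 s] by (simp add: pi_pair_def)
  finally show ?thesis .
qed


definition Lsum :: "(nat \<times> nat) set \<Rightarrow> nat set \<Rightarrow> nat list \<Rightarrow> int" where
  "Lsum R X \<beta> = (\<Sum>xs\<in>osp X. if refines (map card xs) \<beta> then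
      (if bwd R xs then (-1) ^ (card X - length xs) else 0) else 0)"

definition Rsum :: "(nat \<times> nat) set \<Rightarrow> nat set \<Rightarrow> nat list \<Rightarrow> rat" where
  "Rsum R X \<beta> = (\<Sum>xs\<in>osp X. if refines (map card xs) \<beta> then
      (if wbwd R xs \<and> rooted R xs then 1 / of_nat (pi_pair (map card xs) \<beta>) else 0) else 0)"

definition noarc :: "(nat \<times> nat) set \<Rightarrow> nat set \<Rightarrow> nat set \<Rightarrow> bool" where
  "noarc R A C = (\<forall>u\<in>A. \<forall>v\<in>C. (u, v) \<notin> R)"

lemma Lsum_cons:
  assumes f: "finite X" and b: "0 < b" and ac: "acyclic R"
  shows "Lsum R X (b # bs) = (\<Sum>A\<in>Pow X. if card A = b \<and> noarc R A (X - A) then Lsum R (X - A) bs else 0)"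
proof -
  let ?\<Phi> = "\<lambda>xs. if bwd R xs then (-1::int) ^ (card X - length xs) else 0"
  have "Lsum R X (b # bs) = (\<Sum>A\<in>Pow X. \<Sum>xs1\<in>osp A. \<Sum>xs2\<in>osp (X - A).
            if xs1 \<noteq> [] \<and> card A = b \<and> refines (map card xs2) bs then ?\<Phi> (xs1 @ xs2) else 0)"
    unfolding Lsum_def by (rule group_split[OF f])
  also have "\<dots> = (\<Sum>A\<in>Pow X. if card A = b \<and> noarc R A (X - A) then Lsum R (X - A) bs else 0)"
  proof (rule sum.cong[OF refl])
    fix A assume A: "A \<in> Pow X"
    have fA: "finite A" "finite (X - A)" using A f by (auto intro: finite_subset)
    have cX: "card X = card A + card (X - A)" using A fA
      by (metis Diff_partition PowD card_Un_disjoint Diff_disjoint)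
    show "(\<Sum>xs1\<in>osp A. \<Sum>xs2\<in>osp (X - A).
            if xs1 \<noteq> [] \<and> card A = b \<and> refines (map card xs2) bs then ?\<Phi> (xs1 @ xs2) else 0)
        = (if card A = b \<and> noarc R A (X - A) then Lsum R (X - A) bs else 0)"
    proof (cases "card A = b \<and> noarc R A (X - A)")
      case True
      hence Ane: "A \<noteq> {}" using b by auto
      have "(\<Sum>xs1\<in>osp A. \<Sum>xs2\<in>osp (X - A).
            if xs1 \<noteq> [] \<and> card A = b \<and> refines (map card xs2) bs then ?\<Phi> (xs1 @ xs2) else 0)
         = (\<Sum>xs1\<in>osp A. \<Sum>xs2\<in>osp (X - A).
            (if bwd R xs1 then (-1::int) ^ (card A - length xs1) else 0) *
            (if refines (map card xs2) bs then (if bwd R xs2 then (-1) ^ (card (X - A) - length xs2) else 0) else 0))"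
      proof (intro sum.cong refl)
        fix xs1 xs2 assume x1: "xs1 \<in> osp A" and x2: "xs2 \<in> osp (X - A)"
        have ne: "xs1 \<noteq> []" using x1 Ane by auto
        have u: "\<Union>(set xs1) = A" "\<Union>(set xs2) = X - A" using x1 x2 by (auto simp: osp_def)
        have l: "length xs1 \<le> card A" "length xs2 \<le> card (X - A)"
          using osp_len[OF fA(1) x1] osp_len[OF fA(2) x2] .
        have e: "card X - length (xs1 @ xs2) = (card A - length xs1) + (card (X - A) - length xs2)"
          using l cX by simp
        have bw: "bwd R (xs1 @ xs2) = (bwd R xs1 \<and> bwd R xs2)"
          using True u by (simp add: bwd_append noarc_def)
        show "(if xs1 \<noteq> [] \<and> card A = b \<and> refines (map card xs2) bs then ?\<Phi> (xs1 @ xs2) else 0)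
          = (if bwd R xs1 then (-1::int) ^ (card A - length xs1) else 0) *
            (if refines (map card xs2) bs then (if bwd R xs2 then (-1) ^ (card (X - A) - length xs2) else 0) else 0)"
          using ne True unfolding bw e by (simp add: power_add)
      qed
      also have "\<dots> = (\<Sum>xs1\<in>osp A. if bwd R xs1 then (-1::int) ^ (card A - length xs1) else 0) * Lsum R (X - A) bs"
        unfolding Lsum_def by (rule sum_product[symmetric])
      also have "\<dots> = Lsum R (X - A) bs" using recip[OF fA(1) ac] by simp
      finally show ?thesis using True by simp
    next
      case False
      have "\<And>xs1 xs2. xs1 \<in> osp A \<Longrightarrow> xs2 \<in> osp (X - A) \<Longrightarrow>
          (if xs1 \<noteq> [] \<and> card A = b \<and> refines (map card xs2) bs then ?\<Phi> (xs1 @ xs2) else 0) = 0"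
      proof -
        fix xs1 xs2 assume x1: "xs1 \<in> osp A" and x2: "xs2 \<in> osp (X - A)"
        have u: "\<Union>(set xs1) = A" "\<Union>(set xs2) = X - A" using x1 x2 by (auto simp: osp_def)
        have "card A = b \<Longrightarrow> \<not> bwd R (xs1 @ xs2)" using False u by (auto simp: bwd_append noarc_def)
        thus "(if xs1 \<noteq> [] \<and> card A = b \<and> refines (map card xs2) bs then ?\<Phi> (xs1 @ xs2) else 0) = 0"
          by auto
      qed
      thus ?thesis unfolding if_not_P[OF False] by (simp add: sum.neutral)
    qed
  qed
  finally show ?thesis .
qed

lemma Rsum_cons:
  assumes f: "finite X" and b: "0 < b" and ac: "acyclic R"
  shows "Rsum R X (b # bs) = (\<Sum>A\<in>Pow X. if card A = b \<and> noarc R A (X - A) then Rsum R (X - A) bs else 0)"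
proof -
  let ?\<Phi> = "\<lambda>xs. if wbwd R xs \<and> rooted R xs then 1 / of_nat (pi_pair (map card xs) (b # bs)) else (0::rat)"
  have "Rsum R X (b # bs) = (\<Sum>A\<in>Pow X. \<Sum>xs1\<in>osp A. \<Sum>xs2\<in>osp (X - A).
            if xs1 \<noteq> [] \<and> card A = b \<and> refines (map card xs2) bs then ?\<Phi> (xs1 @ xs2) else 0)"
    unfolding Rsum_def by (rule group_split[OF f])
  also have "\<dots> = (\<Sum>A\<in>Pow X. if card A = b \<and> noarc R A (X - A) then Rsum R (X - A) bs else 0)"
  proof (rule sum.cong[OF refl])
    fix A assume A: "A \<in> Pow X"
    have fA: "finite A" "finite (X - A)" using A f by (auto intro: finite_subset)
    show "(\<Sum>xs1\<in>osp A. \<Sum>xs2\<in>osp (X - A).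
            if xs1 \<noteq> [] \<and> card A = b \<and> refines (map card xs2) bs then ?\<Phi> (xs1 @ xs2) else 0)
        = (if card A = b \<and> noarc R A (X - A) then Rsum R (X - A) bs else 0)"
    proof (cases "card A = b \<and> noarc R A (X - A)")
      case True
      hence Ane: "A \<noteq> {}" using b by auto
      have "(\<Sum>xs1\<in>osp A. \<Sum>xs2\<in>osp (X - A).
            if xs1 \<noteq> [] \<and> card A = b \<and> refines (map card xs2) bs then ?\<Phi> (xs1 @ xs2) else 0)
         = (\<Sum>xs1\<in>osp A. \<Sum>xs2\<in>osp (X - A).
            (if wbwd R xs1 \<and> rooted R xs1 then 1 / of_nat (pi_comp (map card xs1)) else (0::rat)) *
            (if refines (map card xs2) bs then (if wbwd R xs2 \<and> rooted R xs2 then 1 / of_nat (pi_pair (map card xs2) bs) else 0) else 0))"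
      proof (intro sum.cong refl)
        fix xs1 xs2 assume x1: "xs1 \<in> osp A" and x2: "xs2 \<in> osp (X - A)"
        have ne: "xs1 \<noteq> []" using x1 Ane by auto
        have u: "\<Union>(set xs1) = A" "\<Union>(set xs2) = X - A" using x1 x2 by (auto simp: osp_def)
        have pp: "pi_pair (map card (xs1 @ xs2)) (b # bs) = pi_comp (map card xs1) * pi_pair (map card xs2) bs"
          using pi_pair_cons[OF osp_pos[OF fA(1) x1] osp_pos[OF fA(2) x2]] osp_card_sum[OF fA(1) x1] True
          by simp
        have bw: "(wbwd R (xs1 @ xs2) \<and> rooted R (xs1 @ xs2)) = ((wbwd R xs1 \<and> rooted R xs1) \<and> (wbwd R xs2 \<and> rooted R xs2))"
          using True u by (auto simp: wbwd_append rooted_append noarc_def)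
        show "(if xs1 \<noteq> [] \<and> card A = b \<and> refines (map card xs2) bs then ?\<Phi> (xs1 @ xs2) else 0)
          = (if wbwd R xs1 \<and> rooted R xs1 then 1 / of_nat (pi_comp (map card xs1)) else (0::rat)) *
            (if refines (map card xs2) bs then (if wbwd R xs2 \<and> rooted R xs2 then 1 / of_nat (pi_pair (map card xs2) bs) else 0) else 0)"
          using ne True unfolding bw pp by simp
      qed
      also have "\<dots> = (\<Sum>xs1\<in>osp A. if wbwd R xs1 \<and> rooted R xs1 then 1 / of_nat (pi_comp (map card xs1)) else (0::rat)) * Rsum R (X - A) bs"
        unfolding Rsum_def by (rule sum_product[symmetric])
      also have "\<dots> = Rsum R (X - A) bs" using rootsum[OF fA(1) ac] by simp
      finally show ?thesis using True by simp
    next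
      case False
      have "\<And>xs1 xs2. xs1 \<in> osp A \<Longrightarrow> xs2 \<in> osp (X - A) \<Longrightarrow>
          (if xs1 \<noteq> [] \<and> card A = b \<and> refines (map card xs2) bs then ?\<Phi> (xs1 @ xs2) else 0) = 0"
      proof -
        fix xs1 xs2 assume x1: "xs1 \<in> osp A" and x2: "xs2 \<in> osp (X - A)"
        have u: "\<Union>(set xs1) = A" "\<Union>(set xs2) = X - A" using x1 x2 by (auto simp: osp_def)
        have "card A = b \<Longrightarrow> \<not> wbwd R (xs1 @ xs2)" using False u by (auto simp: wbwd_append noarc_def)
        thus "(if xs1 \<noteq> [] \<and> card A = b \<and> refines (map card xs2) bs then ?\<Phi> (xs1 @ xs2) else 0) = 0"
          by auto
      qed
      thus ?thesis unfolding if_not_P[OF False] by (simp add: sum.neutral)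
    qed
  qed
  finally show ?thesis .
qed

lemma main_identity:
  assumes "finite X" "acyclic R" "\<forall>b\<in>set \<beta>. 0 < b"
  shows "of_int (Lsum R X \<beta>) = Rsum R X \<beta>"
  using assms(1,3)
proof (induction \<beta> arbitrary: X)
  case Nil
  have "Lsum R X [] = (if X = {} then 1 else 0)"
  proof -
    have "Lsum R X [] = (\<Sum>xs\<in>osp X. if xs = [] then 1 else 0)"
      unfolding Lsum_def by (intro sum.cong refl) auto
    also have "\<dots> = (if X = {} then 1 else 0)" using Nil by (simp add: finite_osp)
    finally show ?thesis .
  qed
  moreover have "Rsum R X [] = (if X = {} then 1 else 0)"
  proof -
    have "Rsum R X [] = (\<Sum>xs\<in>osp X. if xs = [] then 1 else 0)"
      unfolding Rsum_def by (intro sum.cong refl) (auto simp: pi_pair_def rooted_def)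
    also have "\<dots> = (if X = {} then 1 else 0)" using Nil by (simp add: finite_osp)
    finally show ?thesis .
  qed
  ultimately show ?case by simp
next
  case (Cons b bs)
  have b: "0 < b" using Cons by simp
  have fA: "\<And>A. A \<in> Pow X \<Longrightarrow> finite (X - A)" using Cons by auto
  have "of_int (Lsum R X (b # bs)) = (\<Sum>A\<in>Pow X. of_int (if card A = b \<and> noarc R A (X - A) then Lsum R (X - A) bs else 0) :: rat)"
    unfolding Lsum_cons[OF Cons(2) b assms(2)] by (rule of_int_sum)
  also have "\<dots> = (\<Sum>A\<in>Pow X. if card A = b \<and> noarc R A (X - A) then Rsum R (X - A) bs else 0)"
  proof (rule sum.cong[OF refl])
    fix A assume "A \<in> Pow X"
    hence "of_int (Lsum R (X - A) bs) = Rsum R (X - A) bs" using Cons.IH fA Cons(3) by simp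
    thus "(of_int (if card A = b \<and> noarc R A (X - A) then Lsum R (X - A) bs else 0) :: rat)
        = (if card A = b \<and> noarc R A (X - A) then Rsum R (X - A) bs else 0)" by simp
  qed
  also have "\<dots> = Rsum R X (b # bs)" by (rule Rsum_cons[OF Cons(2) b assms(2), symmetric])
  finally show ?case .
qed


definition ex :: "nat list \<Rightarrow> nat \<Rightarrow> nat" where
  "ex g j = (if 1 \<le> j \<and> j \<le> length g then g ! (j - 1) else 0)"

lemma sorted_nth_le_iff:
  "sorted js \<Longrightarrow> p < length js \<Longrightarrow> (js ! p \<le> (v::nat)) = (p < length (filter (\<lambda>x. x \<le> v) js))"
proof (induction js arbitrary: p)
  case Nil thus ?case by simp
next
  case (Cons x xs)
  have xle: "\<forall>y\<in>set xs. x \<le> y" using Cons.prems(1) by simp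
  show ?case
  proof (cases "x \<le> v")
    case True
    show ?thesis
    proof (cases p)
      case 0 thus ?thesis using True by simp
    next
      case (Suc p') thus ?thesis using Cons True by simp
    qed
  next
    case False
    hence "filter (\<lambda>x. x \<le> v) xs = []" using xle by (auto simp: filter_empty_conv)
    moreover have "(x # xs) ! p > v"
    proof (cases p)
      case 0 thus ?thesis using False by simp
    next
      case (Suc p')
      hence "xs ! p' \<in> set xs" using Cons.prems(2) by simp
      thus ?thesis using Suc xle False by fastforce
    qed
    ultimately show ?thesis using False by simp
  qed
qed

lemma sorted_step_iff:
  assumes "sorted js" "0 < i" "i < length js"
  shows "(js ! (i - 1) < js ! i) = (\<exists>v. length (filter (\<lambda>x. x \<le> (v::nat)) js) = i)"
proof
  assume lt: "js ! (i - 1) < js ! i"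
  let ?v = "js ! (i - 1)"
  have "i - 1 < length (filter (\<lambda>x. x \<le> ?v) js)" using sorted_nth_le_iff[OF assms(1), of "i - 1" ?v] assms by simp
  moreover have "\<not> i < length (filter (\<lambda>x. x \<le> ?v) js)" using sorted_nth_le_iff[OF assms(1), of i ?v] assms lt by simp
  ultimately show "\<exists>v. length (filter (\<lambda>x. x \<le> v) js) = i" by (intro exI[of _ ?v]) simp
next
  assume "\<exists>v. length (filter (\<lambda>x. x \<le> v) js) = i"
  then obtain v where v: "length (filter (\<lambda>x. x \<le> v) js) = i" by blast
  have "js ! (i - 1) \<le> v" using sorted_nth_le_iff[OF assms(1), of "i - 1" v] assms v by simp
  moreover have "\<not> js ! i \<le> v" using sorted_nth_le_iff[OF assms(1), of i v] assms v by simp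
  ultimately show "js ! (i - 1) < js ! i" by simp
qed

lemma length_filter_le_count: "length (filter (\<lambda>x. x \<le> v) js) = (\<Sum>j\<le>v. count_list js (j::nat))"
proof (induction js)
  case Nil thus ?case by simp
next
  case (Cons a js)
  have "(\<Sum>j\<le>v. count_list (a # js) j) = (\<Sum>j\<le>v. count_list js j + (if a = j then 1 else 0))"
    by (intro sum.cong refl) simp
  also have "\<dots> = (\<Sum>j\<le>v. count_list js j) + (\<Sum>j\<le>v. if a = j then 1 else 0)"
    by (rule sum.distrib)
  also have "(\<Sum>j\<le>v. if a = j then 1 else 0) = (if a \<le> v then 1 else (0::nat))"
    by (subst sum.delta') auto
  finally show ?case using Cons by simp
qed

lemma sum_ex: "(\<Sum>j\<le>v. ex g j) = psum g (min v (length g))"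
proof (induction v)
  case 0 thus ?case by (simp add: ex_def psum_def)
next
  case (Suc v)
  have "(\<Sum>j\<le>Suc v. ex g j) = psum g (min v (length g)) + ex g (Suc v)" using Suc by simp
  also have "\<dots> = psum g (min (Suc v) (length g))"
  proof (cases "Suc v \<le> length g")
    case True
    hence "take (Suc v) g = take v g @ [g ! v]" by (simp add: take_Suc_conv_app_nth)
    thus ?thesis using True by (simp add: ex_def psum_def min_def)
  next
    case False thus ?thesis by (simp add: ex_def min_def psum_def)
  qed
  finally show ?case .
qed

fun Lc :: "nat \<Rightarrow> nat list \<Rightarrow> nat list" where
  "Lc s [] = []"
| "Lc s (g # gs) = replicate g s @ Lc (Suc s) gs"

lemma Lc_set: "x \<in> set (Lc s gs) \<Longrightarrow> s \<le> x"
  by (induction gs arbitrary: s) (auto dest: Suc_leD)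

lemma Lc_sorted: "sorted (Lc s gs)"
  by (induction gs arbitrary: s) (auto simp: sorted_append dest: Lc_set)

lemma Lc_length: "length (Lc s gs) = sum_list gs"
  by (induction gs arbitrary: s) auto

lemma Lc_count: "count_list (Lc s gs) j = (if s \<le> j \<and> j < s + length gs then gs ! (j - s) else 0)"
proof (induction gs arbitrary: s)
  case Nil thus ?case by simp
next
  case (Cons g gs)
  have "count_list (replicate g s) j = (if j = s then g else 0)"
    by (induction g) auto
  thus ?case using Cons[of "Suc s"] by (auto simp: nth_Cons')
qed

lemma Lc_count_ex: "count_list (Lc 1 g) j = ex g j"
  by (simp add: Lc_count ex_def)

lemma Lc_count_ex': "count_list (Lc (Suc 0) g) j = ex g j"
  using Lc_count_ex by simp

lemma sorted_unique_counts:
  assumes "sorted xs" "sorted ys" "\<forall>j. count_list xs j = count_list ys (j::nat)"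
  shows "xs = ys"
proof -
  have "mset xs = mset ys" using assms(3) by (simp add: multiset_eq_iff count_mset)
  thus ?thesis using assms(1,2) by (metis properties_for_sort sorted_sort_id)
qed

lemma Sset_iff:
  assumes pos: "\<forall>x\<in>set g. 0 < x" and "0 < i" "i < sum_list g"
  shows "(i \<in> Sset g) = (\<exists>v. psum g (min v (length g)) = i)"
proof
  assume "i \<in> Sset g"
  then obtain k where "k \<in> {1..<length g}" "psum g k = i" by (auto simp: Sset_def)
  thus "\<exists>v. psum g (min v (length g)) = i" by (intro exI[of _ k]) simp
next
  assume "\<exists>v. psum g (min v (length g)) = i"
  then obtain v where v: "psum g (min v (length g)) = i" by blast
  let ?k = "min v (length g)"
  have "?k \<noteq> 0"
  proof
    assume "?k = 0" hence "psum g ?k = 0" by (simp add: psum_def)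
    thus False using v assms(2) by simp
  qed
  moreover have "?k \<noteq> length g"
  proof
    assume "?k = length g" hence "psum g ?k = sum_list g" by (simp add: psum_def)
    thus False using v assms(3) by simp
  qed
  ultimately show "i \<in> Sset g" using v by (auto simp: Sset_def)
qed

lemma Fcoef_ex:
  assumes g: "g \<in> comps n" and S: "S \<subseteq> {1..<n}"
  shows "Fcoef n S (ex g) = (if S \<subseteq> Sset g then 1 else 0)"
proof -
  have pos: "\<forall>x\<in>set g. 0 < x" and sg: "sum_list g = n" using g by (auto simp: comps_def)
  let ?L = "Lc 1 g"
  let ?P = "\<lambda>js. length js = n \<and> sorted js \<and> (\<forall>j\<in>set js. 1 \<le> j) \<and> (\<forall>j. count_list js j = ex g j)"
  have PL: "?P ?L" using Lc_sorted Lc_length Lc_count_ex sg Lc_set by auto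
  have uniq: "\<And>js. ?P js \<Longrightarrow> js = ?L"
  proof -
    fix js assume P: "?P js"
    have "\<forall>j. count_list js j = count_list ?L j" using P Lc_count_ex by simp
    thus "js = ?L" using sorted_unique_counts[of js ?L] P Lc_sorted by blast
  qed
  have step: "\<And>i. i \<in> S \<Longrightarrow> (?L ! (i - 1) < ?L ! i) = (i \<in> Sset g)"
  proof -
    fix i assume "i \<in> S"
    hence i: "0 < i" "i < n" using S by auto
    have "(?L ! (i - 1) < ?L ! i) = (\<exists>v. length (filter (\<lambda>x. x \<le> v) ?L) = i)"
      using sorted_step_iff[OF Lc_sorted i(1)] i Lc_length sg by simp
    also have "\<dots> = (\<exists>v. psum g (min v (length g)) = i)"
      by (simp add: length_filter_le_count Lc_count_ex Lc_count_ex' sum_ex)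
    also have "\<dots> = (i \<in> Sset g)" using Sset_iff[OF pos] i sg by simp
    finally show "(?L ! (i - 1) < ?L ! i) = (i \<in> Sset g)" .
  qed
  have "{js. length js = n \<and> sorted js \<and> (\<forall>j\<in>set js. 1 \<le> j) \<and> (\<forall>i\<in>S. js ! (i - 1) < js ! i) \<and> (\<forall>j. count_list js j = ex g j)}
      = (if S \<subseteq> Sset g then {?L} else {})" (is "?A = _")
  proof (cases "S \<subseteq> Sset g")
    case True
    have "?A = {?L}"
    proof
      show "?A \<subseteq> {?L}" using uniq by blast
      show "{?L} \<subseteq> ?A" using PL step True by blast
    qed
    thus ?thesis using True by simp
  next
    case False
    then obtain i where i: "i \<in> S" "i \<notin> Sset g" by blast
    have "?A = {}"
    proof (rule ccontr)
      assume "?A \<noteq> {}"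
      then obtain js where "js \<in> ?A" by blast
      hence "js = ?L" "?L ! (i - 1) < ?L ! i" using uniq i(1) by auto
      thus False using step[OF i(1)] i(2) by simp
    qed
    thus ?thesis using False by simp
  qed
  thus ?thesis by (simp add: Fcoef_def)
qed


lemma Mcoef_ex:
  assumes pa: "\<forall>x\<in>set a. 0 < x" and pg: "\<forall>x\<in>set g. 0 < x"
  shows "Mcoef a (ex g) = (if a = g then 1 else 0)"
proof -
  let ?Q = "\<lambda>ix. length ix = length a \<and> sorted_wrt (<) ix \<and> (\<forall>i\<in>set ix. 1 \<le> i)
      \<and> (\<forall>j. ex g j = (\<Sum>k<length a. if ix ! k = j then a ! k else 0))"
  have "(\<exists>ix. ?Q ix) = (a = g)"
  proof
    assume "\<exists>ix. ?Q ix"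
    then obtain ix where Q: "?Q ix" by blast
    have inj: "\<And>k k'. k < length ix \<Longrightarrow> k' < length ix \<Longrightarrow> ix ! k = ix ! k' \<Longrightarrow> k = k'"
    proof -
      fix k k' assume "k < length ix" "k' < length ix" "ix ! k = ix ! k'"
      thus "k = k'" using sorted_wrt_nth_less[OF conjunct1[OF conjunct2[OF Q]], of k k']
          sorted_wrt_nth_less[OF conjunct1[OF conjunct2[OF Q]], of k' k]
        by (cases "k < k'"; cases "k' < k") auto
    qed
    have val: "\<And>k. k < length a \<Longrightarrow> ex g (ix ! k) = a ! k"
    proof -
      fix k assume k: "k < length a"
      have "ex g (ix ! k) = (\<Sum>k'<length a. if ix ! k' = ix ! k then a ! k' else 0)" using Q by blast
      also have "\<dots> = (\<Sum>k'<length a. if k' = k then a ! k' else 0)"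
        using inj k Q by (intro sum.cong refl) auto
      also have "\<dots> = a ! k" using k by simp
      finally show "ex g (ix ! k) = a ! k" .
    qed
    have dist: "distinct ix" using Q by (simp add: strict_sorted_iff)
    have "set ix = {1..length g}"
    proof
      show "set ix \<subseteq> {1..length g}"
      proof
        fix j assume "j \<in> set ix"
        then obtain k where k: "k < length ix" "ix ! k = j" by (auto simp: in_set_conv_nth)
        have "ex g j > 0" using val[of k] k Q pa by (auto simp: in_set_conv_nth)
        thus "j \<in> {1..length g}" by (auto simp: ex_def split: if_splits)
      qed
      show "{1..length g} \<subseteq> set ix"
      proof
        fix j assume j: "j \<in> {1..length g}"
        hence "ex g j > 0" using pg by (auto simp: ex_def)
        moreover have "ex g j = (\<Sum>k<length a. if ix ! k = j then a ! k else 0)" using Q by blast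
        ultimately have "(\<Sum>k<length a. if ix ! k = j then a ! k else 0) \<noteq> 0" by linarith
        then obtain k where "k \<in> {..<length a}" "(if ix ! k = j then a ! k else 0) \<noteq> 0"
          by (rule sum.not_neutral_contains_not_neutral)
        hence "k < length a" "ix ! k = j" by (auto split: if_splits)
        thus "j \<in> set ix" using Q by auto
      qed
    qed
    hence "sorted_list_of_set {1..length g} = ix"
      using sorted_list_of_set_unique[of "{1..length g}" "ix"] Q dist distinct_card by fastforce
    hence isv: "ix = [1..<Suc (length g)]"
      by (metis atLeastLessThanSuc_atLeastAtMost sorted_list_of_set_range)
    have la: "length a = length g" using Q isv by (simp del: upt_Suc)
    show "a = g"
    proof (rule nth_equalityI)
      show "length a = length g" by (rule la)
      fix k assume "k < length a"
      thus "a ! k = g ! k" using val[of k] isv la by (simp add: ex_def del: upt_Suc)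
    qed
  next
    assume ag: "a = g"
    let ?ixs = "[1..<Suc (length g)]"
    have "?Q ?ixs"
    proof (intro conjI allI)
      fix j
      have "(\<Sum>k<length a. if ?ixs ! k = j then a ! k else 0) = (\<Sum>k<length g. if k = j - 1 \<and> 1 \<le> j then g ! k else 0)"
        using ag by (intro sum.cong refl) (auto simp del: upt_Suc)
      also have "\<dots> = ex g j" by (cases "1 \<le> j") (auto simp: ex_def)
      finally show "ex g j = (\<Sum>k<length a. if ?ixs ! k = j then a ! k else 0)" by simp
    qed (use ag in \<open>auto simp: sorted_wrt_iff_nth_less simp del: upt_Suc\<close>)
    thus "\<exists>ix. ?Q ix" by blast
  qed
  thus ?thesis by (simp add: Mcoef_def)
qed

lemma psum_add: "psum a (k + m) = psum a k + psum (drop k a) m"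
  by (simp add: psum_def take_add)

lemma Sset_Cons: "Sset (b # bs) = (if bs = [] then {} else insert b ((+) b ` Sset bs))"
proof (cases "bs = []")
  case True thus ?thesis by (simp add: Sset_def)
next
  case False
  have p: "\<And>i. psum (b # bs) (Suc i) = b + psum bs i" by (simp add: psum_def)
  have "Sset (b # bs) = insert b ((+) b ` Sset bs)"
  proof
    show "Sset (b # bs) \<subseteq> insert b ((+) b ` Sset bs)"
    proof
      fix x assume "x \<in> Sset (b # bs)"
      then obtain i where i: "1 \<le> i" "i < Suc (length bs)" "x = psum (b # bs) i" by (auto simp: Sset_def)
      then obtain i' where i': "i = Suc i'" by (cases i) auto
      show "x \<in> insert b ((+) b ` Sset bs)"
      proof (cases "i' = 0")
        case True thus ?thesis using i i' p[of 0] by (simp add: psum_def)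
      next
        case False thus ?thesis using i i' p[of i'] by (auto simp: Sset_def)
      qed
    qed
    show "insert b ((+) b ` Sset bs) \<subseteq> Sset (b # bs)"
    proof
      fix x assume "x \<in> insert b ((+) b ` Sset bs)"
      then consider "x = b" | i where "1 \<le> i" "i < length bs" "x = b + psum bs i" by (auto simp: Sset_def)
      thus "x \<in> Sset (b # bs)"
      proof cases
        case 1
        have "psum (b # bs) 1 = b" by (simp add: psum_def)
        moreover have "1 \<in> {1..<length (b # bs)}" using False by simp
        ultimately show ?thesis using 1 unfolding Sset_def by (metis image_eqI)
      next
        case (2 i)
        have "Suc i \<in> {1..<length (b # bs)}" using 2 by simp
        moreover have "psum (b # bs) (Suc i) = x" using p 2 by simp
        ultimately show ?thesis unfolding Sset_def by (metis image_eqI)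
      qed
    qed
  qed
  thus ?thesis using False by simp
qed


lemma comps_pos: "g \<in> comps n \<Longrightarrow> \<forall>x\<in>set g. 0 < x"
  by (simp add: comps_def)

lemma comps_sum: "g \<in> comps n \<Longrightarrow> sum_list g = n"
  by (simp add: comps_def)

lemma pos_sum0: "\<forall>x\<in>set g. (0::nat) < x \<Longrightarrow> sum_list g = 0 \<Longrightarrow> g = []"
  by (cases g) auto

lemma Sset_pos: "\<forall>x\<in>set g. (0::nat) < x \<Longrightarrow> s \<in> Sset g \<Longrightarrow> 0 < s \<and> s < sum_list g"
proof -
  assume pos: "\<forall>x\<in>set g. (0::nat) < x" and "s \<in> Sset g"
  then obtain i where i: "1 \<le> i" "i < length g" "s = psum g i" by (auto simp: Sset_def)
  then obtain i' where "i = Suc i'" by (cases i) auto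
  thus "0 < s \<and> s < sum_list g" using psum_Suc_pos[OF pos, of i'] psum_lt_sum[OF pos, of i] i by simp
qed

lemma psum_mono: "k \<le> k' \<Longrightarrow> psum g k \<le> psum (g::nat list) k'"
  by (simp add: psum_def sum_take_mono)

lemma refines_iff:
  assumes "\<forall>x\<in>set a. 0 < x" "\<forall>x\<in>set g. 0 < x" "sum_list a = sum_list g"
  shows "refines a g = (Sset g \<subseteq> Sset a)"
  using assms
proof (induction g arbitrary: a)
  case Nil
  hence "a = []" using pos_sum0 by simp
  thus ?case by (simp add: Sset_def)
next
  case (Cons b bs)
  have pa: "\<forall>x\<in>set a. 0 < x" and pb: "0 < b" and pbs: "\<forall>x\<in>set bs. 0 < x" using Cons.prems by auto
  have sa: "sum_list a = b + sum_list bs" using Cons.prems by simp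
  show ?case
  proof
    assume "refines a (b # bs)"
    then obtain k where k: "0 < k" "k \<le> length a" "sum_list (take k a) = b" "refines (drop k a) bs" by auto
    have pd: "\<forall>x\<in>set (drop k a). 0 < x" using pa by (auto dest: in_set_dropD)
    have sd: "sum_list (drop k a) = sum_list bs"
      using sa k(3) append_take_drop_id[of k a] sum_list_append[of "take k a" "drop k a"] by simp
    have IH: "Sset bs \<subseteq> Sset (drop k a)" using Cons.IH[OF pd pbs sd] k(4) by simp
    show "Sset (b # bs) \<subseteq> Sset a"
    proof (cases "bs = []")
      case True thus ?thesis by (simp add: Sset_Cons)
    next
      case False
      hence "sum_list bs > 0" using pbs by (cases bs) auto
      have "drop k a \<noteq> []"
      proof
        assume "drop k a = []" hence "sum_list (drop k a) = 0" by simp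
        thus False using sd \<open>sum_list bs > 0\<close> by (metis less_irrefl)
      qed
      hence kl: "k < length a" by simp
      have "b \<in> Sset a" using k kl by (auto simp: Sset_def psum_def intro!: image_eqI[of _ _ k])
      moreover have "(+) b ` Sset bs \<subseteq> Sset a"
      proof
        fix x assume "x \<in> (+) b ` Sset bs"
        then obtain s where s: "s \<in> Sset (drop k a)" "x = b + s" using IH by auto
        then obtain m where m: "1 \<le> m" "m < length (drop k a)" "s = psum (drop k a) m" by (auto simp: Sset_def)
        have "x = psum a (k + m)" using psum_add[of a k m] s m k(3) by (simp add: psum_def)
        moreover have "k + m \<in> {1..<length a}" using m k by auto
        ultimately show "x \<in> Sset a" by (auto simp: Sset_def)
      qed
      ultimately show ?thesis using False by (simp add: Sset_Cons)
    qed
  next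
    assume sub: "Sset (b # bs) \<subseteq> Sset a"
    show "refines a (b # bs)"
    proof (cases "bs = []")
      case True
      hence "sum_list a = b" using sa by simp
      hence "a \<noteq> []" using pb by auto
      thus ?thesis using True \<open>sum_list a = b\<close> by (auto intro!: exI[of _ "length a"])
    next
      case False
      have "b \<in> Sset a" using sub False by (simp add: Sset_Cons)
      then obtain k where k: "1 \<le> k" "k < length a" "psum a k = b" by (auto simp: Sset_def)
      let ?a' = "drop k a"
      have pd: "\<forall>x\<in>set ?a'. 0 < x" using pa by (auto dest: in_set_dropD)
      have sd: "sum_list ?a' = sum_list bs"
        using sa k(3) append_take_drop_id[of k a] sum_list_append[of "take k a" "drop k a"] by (simp add: psum_def)
      have "Sset bs \<subseteq> Sset ?a'"
      proof
        fix s assume s: "s \<in> Sset bs"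
        have s0: "0 < s" using Sset_pos[OF pbs s] by simp
        have "(+) b ` Sset bs \<subseteq> Sset a" using sub False by (simp add: Sset_Cons)
        hence "b + s \<in> Sset a" using s by blast
        then obtain k' where k': "1 \<le> k'" "k' < length a" "psum a k' = b + s" by (auto simp: Sset_def)
        have "k < k'"
        proof (rule ccontr)
          assume "\<not> k < k'" hence "psum a k' \<le> psum a k" by (intro psum_mono) simp
          thus False using k'(3) k(3) s0 by simp
        qed
        then obtain m where m: "k' = k + m" "1 \<le> m" by (metis less_imp_add_positive One_nat_def Suc_leI)
        have "s = psum ?a' m" using psum_add[of a k m] k'(3) m k(3) by simp
        moreover have "m \<in> {1..<length ?a'}" using m k' by auto
        ultimately show "s \<in> Sset ?a'" by (auto simp: Sset_def)
      qed
      hence "refines ?a' bs" using Cons.IH[OF pd pbs sd] by simp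
      thus ?thesis using k by (auto simp: psum_def intro!: exI[of _ k])
    qed
  qed
qed

lemma refines_len: "refines a g \<Longrightarrow> length g \<le> length a"
proof (induction g arbitrary: a)
  case Nil thus ?case by simp
next
  case (Cons b bs)
  then obtain k where "0 < k" "k \<le> length a" "refines (drop k a) bs" by auto
  thus ?case using Cons.IH by fastforce
qed

lemma refines_eq_len: "refines a g \<Longrightarrow> length a = length g \<Longrightarrow> a = g"
proof (induction g arbitrary: a)
  case Nil thus ?case by simp
next
  case (Cons b bs)
  then obtain k where k: "0 < k" "k \<le> length a" "sum_list (take k a) = b" "refines (drop k a) bs" by auto
  have "length bs \<le> length (drop k a)" using refines_len[OF k(4)] .
  hence "k = 1" using k Cons.prems(2) by simp
  hence "drop 1 a = bs" using Cons.IH[OF k(4)[unfolded \<open>k = 1\<close>]] Cons.prems(2) by simp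
  moreover have "a \<noteq> []" using k by auto
  ultimately show ?case using k(3) \<open>k = 1\<close> by (cases a) auto
qed

lemma card_Sset: "\<forall>x\<in>set g. (0::nat) < x \<Longrightarrow> card (Sset g) = length g - 1"
proof -
  assume pos: "\<forall>x\<in>set g. (0::nat) < x"
  have "inj_on (psum g) {1..<length g}"
    by (rule inj_onI) (use sum_take_inj[OF pos] in \<open>auto simp: psum_def\<close>)
  thus ?thesis by (simp add: Sset_def card_image)
qed

lemma Sset_sub: "g \<in> comps n \<Longrightarrow> Sset g \<subseteq> {1..<n}"
  using Sset_pos[OF comps_pos] comps_sum by fastforce

lemma Sset_inj: "a \<in> comps n \<Longrightarrow> g \<in> comps n \<Longrightarrow> Sset a = Sset g \<Longrightarrow> a = g"
proof -
  assume a: "a \<in> comps n" and g: "g \<in> comps n" and e: "Sset a = Sset g"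
  have "refines a g" using refines_iff[OF comps_pos[OF a] comps_pos[OF g]] comps_sum[OF a] comps_sum[OF g] e by simp
  moreover have "length a = length g"
  proof (cases "n = 0")
    case True thus ?thesis using a g pos_sum0[OF comps_pos[OF a]] pos_sum0[OF comps_pos[OF g]] comps_sum[OF a] comps_sum[OF g] by simp
  next
    case False
    hence "a \<noteq> []" "g \<noteq> []" using comps_sum[OF a] comps_sum[OF g] by (metis sum_list.Nil)+
    thus ?thesis using card_Sset[OF comps_pos[OF a]] card_Sset[OF comps_pos[OF g]] e by (cases a; cases g) auto
  qed
  ultimately show "a = g" by (rule refines_eq_len)
qed

lemma Sset_surj: "U \<subseteq> {1..<n} \<Longrightarrow> \<exists>g\<in>comps n. Sset g = U"
proof (induction n arbitrary: U rule: less_induct)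
  case (less n)
  show ?case
  proof (cases "U = {}")
    case True
    show ?thesis
    proof (cases "n = 0")
      case True thus ?thesis using \<open>U = {}\<close> by (intro bexI[of _ "[]"]) (auto simp: comps_def Sset_def)
    next
      case False thus ?thesis using \<open>U = {}\<close> by (intro bexI[of _ "[n]"]) (auto simp: comps_def Sset_def)
    qed
  next
    case False
    define m where "m = Min U"
    have fU: "finite U" using less.prems finite_subset by auto
    have mU: "m \<in> U" using False fU by (simp add: m_def)
    have mle: "\<And>u. u \<in> U \<Longrightarrow> m \<le> u" using fU by (simp add: m_def)
    have m1: "1 \<le> m" "m < n" using mU less.prems by auto
    define U' where "U' = (\<lambda>u. u - m) ` (U - {m})"
    have U'sub: "U' \<subseteq> {1..<n - m}"
    proof
      fix x assume "x \<in> U'"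
      then obtain u where u: "u \<in> U" "u \<noteq> m" "x = u - m" by (auto simp: U'_def)
      have "m < u" using mle[OF u(1)] u(2) by simp
      moreover have "u < n" using u(1) less.prems by auto
      ultimately show "x \<in> {1..<n - m}" using u(3) by auto
    qed
    obtain g' where g': "g' \<in> comps (n - m)" "Sset g' = U'" using less.IH[of "n - m" U'] U'sub m1 by auto
    have g'ne: "g' \<noteq> []" using comps_sum[OF g'(1)] m1 by auto
    have "Sset (m # g') = insert m ((+) m ` U')" using g'ne g'(2) by (simp add: Sset_Cons)
    also have "(+) m ` U' = U - {m}"
    proof -
      have "(+) m ` U' = (\<lambda>u. m + (u - m)) ` (U - {m})" by (simp add: U'_def image_image)
      also have "\<dots> = U - {m}" using mle by (intro image_cong_simp[THEN trans[OF _ image_ident]]) auto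
      finally show ?thesis .
    qed
    also have "insert m (U - {m}) = U" using mU by auto
    finally have "Sset (m # g') = U" .
    moreover have "m # g' \<in> comps n" using g'(1) m1 by (auto simp: comps_def)
    ultimately show ?thesis by blast
  qed
qed

lemma Sset_bij: "bij_betw Sset (comps n) (Pow {1..<n})"
proof (rule bij_betwI')
  show "\<And>x y. x \<in> comps n \<Longrightarrow> y \<in> comps n \<Longrightarrow> (Sset x = Sset y) = (x = y)" using Sset_inj by blast
  show "\<And>x. x \<in> comps n \<Longrightarrow> Sset x \<in> Pow {1..<n}" using Sset_sub by blast
  show "\<And>y. y \<in> Pow {1..<n} \<Longrightarrow> \<exists>x\<in>comps n. y = Sset x" using Sset_surj by (metis PowD)
qed

lemma psum_rev: "k \<le> length g \<Longrightarrow> psum (rev g) k = sum_list g - psum g (length g - k)"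
proof -
  assume k: "k \<le> length g"
  have "psum (rev g) k = sum_list (drop (length g - k) g)" by (simp add: psum_def take_rev)
  also have "\<dots> = sum_list g - psum g (length g - k)"
    using append_take_drop_id[of "length g - k" g] sum_list_append[of "take (length g - k) g" "drop (length g - k) g"]
    by (simp add: psum_def)
  finally show ?thesis .
qed

lemma Sset_rev: "Sset (rev g) = (\<lambda>s. sum_list g - s) ` Sset g"
proof
  show "Sset (rev g) \<subseteq> (\<lambda>s. sum_list g - s) ` Sset g"
  proof
    fix x assume "x \<in> Sset (rev g)"
    then obtain k where k: "1 \<le> k" "k < length g" "x = psum (rev g) k" by (auto simp: Sset_def)
    hence "x = sum_list g - psum g (length g - k)" using psum_rev by simp
    moreover have "length g - k \<in> {1..<length g}" using k by auto
    ultimately show "x \<in> (\<lambda>s. sum_list g - s) ` Sset g" by (auto simp: Sset_def)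
  qed
  show "(\<lambda>s. sum_list g - s) ` Sset g \<subseteq> Sset (rev g)"
  proof
    fix x assume "x \<in> (\<lambda>s. sum_list g - s) ` Sset g"
    then obtain k where k: "1 \<le> k" "k < length g" "x = sum_list g - psum g k" by (auto simp: Sset_def)
    hence "x = psum (rev g) (length g - k)" using psum_rev[of "length g - k" g] by simp
    moreover have "length g - k \<in> {1..<length g}" using k by auto
    ultimately show "x \<in> Sset (rev g)" by (auto simp: Sset_def)
  qed
qed

lemma inj_on_img_sub: "inj_on f (A \<union> B) \<Longrightarrow> (f ` A \<subseteq> f ` B) = (A \<subseteq> B)"
  unfolding inj_on_def by blast

lemma comp_le_rev:
  assumes a: "a \<in> comps n" and g: "g \<in> comps n"
  shows "comp_le (rev a) (rev g) = comp_le a g"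
proof -
  have "Sset a \<union> Sset g \<subseteq> {..n}" using Sset_sub[OF a] Sset_sub[OF g] by auto
  moreover have "inj_on (\<lambda>s. n - s) {..n}" by (rule inj_onI) auto
  ultimately have "inj_on (\<lambda>s. n - s) (Sset a \<union> Sset g)" by (rule inj_on_subset[rotated])
  thus ?thesis unfolding comp_le_def Sset_rev comps_sum[OF a] comps_sum[OF g]
    using inj_on_img_sub[of "\<lambda>s. n - s" "Sset g" "Sset a"] by (simp add: Un_commute)
qed


fun chs :: "(nat \<times> nat) list \<Rightarrow> ((nat \<times> nat) list \<times> nat \<times> nat) list" where
  "chs [] = [([], 0, 0)]"
| "chs (e # es) = concat (map (\<lambda>(R, a, b). [(R, a, b), (e # R, Suc a, b), ((snd e, fst e) # R, a, Suc b)]) (chs es))"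

definition wt :: "(nat \<Rightarrow> nat) \<Rightarrow> (nat \<times> nat) list \<times> nat \<times> nat \<Rightarrow> rpoly2" where
  "wt \<kappa> c = (case c of (R, a, b) \<Rightarrow> if (\<forall>(u, v)\<in>set R. \<kappa> u < \<kappa> v) then yvar ^ a * zvar ^ b else 0)"

lemma sum_list_concat': "sum_list (concat xss) = sum_list (map sum_list xss)"
  by (induction xss) auto

lemma asc_add: "asc (add_mset e E) \<kappa> = asc E \<kappa> + (if \<kappa> (fst e) < \<kappa> (snd e) then 1 else 0)"
  by (cases e) (simp add: asc_def)

lemma inv_add: "inv (add_mset e E) \<kappa> = inv E \<kappa> + (if \<kappa> (snd e) < \<kappa> (fst e) then 1 else 0)"
  by (cases e) (simp add: inv_def)

lemma weight_chs:
  "(yvar + 1) ^ asc (mset es) \<kappa> * (zvar + 1) ^ inv (mset es) \<kappa> = sum_list (map (wt \<kappa>) (chs es))"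
proof (induction es)
  case Nil thus ?case by (simp add: asc_def inv_def wt_def)
next
  case (Cons e es)
  obtain i j where e: "e = (i, j)" by (cases e)
  let ?f = "\<lambda>c. wt \<kappa> c * (1 + (if \<kappa> i < \<kappa> j then yvar else 0) + (if \<kappa> j < \<kappa> i then zvar else 0))"
  have "sum_list (map (wt \<kappa>) (chs (e # es))) = sum_list (map ?f (chs es))"
  proof -
    have "sum_list (map (wt \<kappa>) (chs (e # es)))
        = sum_list (map (\<lambda>(R, a, b). wt \<kappa> (R, a, b) + wt \<kappa> (e # R, Suc a, b) + wt \<kappa> ((j, i) # R, a, Suc b)) (chs es))"
      by (simp add: sum_list_concat' map_concat o_def case_prod_unfold add.assoc e)
    also have "\<dots> = sum_list (map ?f (chs es))"
    proof (intro arg_cong[where f = sum_list] map_cong refl)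
      fix c assume "c \<in> set (chs es)"
      obtain R a b where c: "c = (R, a, b)" by (cases c)
      show "(case c of (R, a, b) \<Rightarrow> wt \<kappa> (R, a, b) + wt \<kappa> (e # R, Suc a, b) + wt \<kappa> ((j, i) # R, a, Suc b)) = ?f c"
        unfolding c e by (auto simp: wt_def algebra_simps)
    qed
    finally show ?thesis .
  qed
  also have "\<dots> = sum_list (map (wt \<kappa>) (chs es)) * (1 + (if \<kappa> i < \<kappa> j then yvar else 0) + (if \<kappa> j < \<kappa> i then zvar else 0))"
    by (simp add: sum_list_mult_const)
  also have "\<dots> = (yvar + 1) ^ asc (mset (e # es)) \<kappa> * (zvar + 1) ^ inv (mset (e # es)) \<kappa>"
    using Cons by (auto simp: asc_add inv_add e algebra_simps)
  finally show ?case by simp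
qed


lemma disj_nth: "disj xs \<Longrightarrow> k < length xs \<Longrightarrow> k' < length xs \<Longrightarrow> k \<noteq> k' \<Longrightarrow> xs ! k \<inter> xs ! k' = {}"
proof (induction xs arbitrary: k k')
  case Nil thus ?case by simp
next
  case (Cons B xs)
  show ?case
  proof (cases k)
    case 0
    then obtain k'' where "k' = Suc k''" using Cons by (cases k') auto
    thus ?thesis using Cons 0 by (auto dest!: nth_mem)
  next
    case (Suc kk)
    show ?thesis
    proof (cases k')
      case 0 thus ?thesis using Cons Suc by (auto dest!: nth_mem)
    next
      case (Suc kk') thus ?thesis using Cons \<open>k = Suc kk\<close> by simp
    qed
  qed
qed

lemma disj_from_nth: "(\<And>k k'. k < length xs \<Longrightarrow> k' < length xs \<Longrightarrow> k \<noteq> k' \<Longrightarrow> xs ! k \<inter> xs ! k' = {}) \<Longrightarrow> disj xs"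
proof (induction xs)
  case Nil thus ?case by simp
next
  case (Cons B xs)
  have "disj xs"
  proof (rule Cons.IH)
    fix k k' assume "k < length xs" "k' < length xs" "k \<noteq> k'"
    thus "xs ! k \<inter> xs ! k' = {}" using Cons.prems[of "Suc k" "Suc k'"] by simp
  qed
  moreover have "B \<inter> \<Union>(set xs) = {}"
  proof -
    have b: "\<And>k. k < length xs \<Longrightarrow> B \<inter> xs ! k = {}" using Cons.prems[of 0 "Suc k" for k] by simp
    show ?thesis
    proof (rule equals0I)
      fix x assume "x \<in> B \<inter> \<Union>(set xs)"
      then obtain k where "k < length xs" "x \<in> B" "x \<in> xs ! k" by (auto simp: in_set_conv_nth)
      thus False using b by blast
    qed
  qed
  ultimately show ?case by simp
qed

definition idx :: "'a set list \<Rightarrow> 'a \<Rightarrow> nat" where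
  "idx xs i = (THE k. k < length xs \<and> i \<in> xs ! k)"

lemma idx_unique: "xs \<in> osp V \<Longrightarrow> k < length xs \<Longrightarrow> i \<in> xs ! k \<Longrightarrow> idx xs i = k"
proof -
  assume xs: "xs \<in> osp V" and k: "k < length xs" "i \<in> xs ! k"
  have d: "disj xs" using xs by (simp add: osp_def)
  show "idx xs i = k" unfolding idx_def
  proof (rule the_equality)
    show "k < length xs \<and> i \<in> xs ! k" using k by simp
    fix k' assume "k' < length xs \<and> i \<in> xs ! k'"
    thus "k' = k" using disj_nth[OF d, of k k'] k by blast
  qed
qed

lemma idx_prop: "xs \<in> osp V \<Longrightarrow> i \<in> V \<Longrightarrow> idx xs i < length xs \<and> i \<in> xs ! idx xs i"
proof -
  assume xs: "xs \<in> osp V" and i: "i \<in> V"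
  then obtain k where "k < length xs" "i \<in> xs ! k" by (auto simp: osp_def in_set_conv_nth)
  thus ?thesis using idx_unique[OF xs] by simp
qed

lemma bwd_nth: "bwd R xs = (\<forall>k k' u v. k < length xs \<longrightarrow> k' < length xs \<longrightarrow> u \<in> xs ! k \<longrightarrow> v \<in> xs ! k' \<longrightarrow> (u, v) \<in> R \<longrightarrow> k' < k)"
proof (induction xs)
  case Nil thus ?case by simp
next
  case (Cons B xs)
  show ?case
  proof
    assume b: "bwd R (B # xs)"
    show "\<forall>k k' u v. k < length (B # xs) \<longrightarrow> k' < length (B # xs) \<longrightarrow> u \<in> (B # xs) ! k \<longrightarrow> v \<in> (B # xs) ! k' \<longrightarrow> (u, v) \<in> R \<longrightarrow> k' < k"
    proof (intro allI impI)
      fix k k' u v assume h: "k < length (B # xs)" "k' < length (B # xs)" "u \<in> (B # xs) ! k" "v \<in> (B # xs) ! k'" "(u, v) \<in> R"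
      show "k' < k"
      proof (cases k)
        case 0
        hence "u \<in> B" using h by simp
        moreover have "v \<in> B \<union> \<Union>(set xs)" using h(2,4) by (cases k') (auto dest!: nth_mem)
        ultimately show ?thesis using b h(5) by auto
      next
        case (Suc kk)
        show ?thesis
        proof (cases k')
          case 0 thus ?thesis using Suc by simp
        next
          case (Suc kk')
          thus ?thesis using Cons.IH b h \<open>k = Suc kk\<close> by auto
        qed
      qed
    qed
  next
    assume h: "\<forall>k k' u v. k < length (B # xs) \<longrightarrow> k' < length (B # xs) \<longrightarrow> u \<in> (B # xs) ! k \<longrightarrow> v \<in> (B # xs) ! k' \<longrightarrow> (u, v) \<in> R \<longrightarrow> k' < k"
    have "bwd R xs"
    proof (subst Cons.IH, intro allI impI)
      fix k k' u v assume "k < length xs" "k' < length xs" "u \<in> xs ! k" "v \<in> xs ! k'" "(u, v) \<in> R"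
      thus "k' < k" using h[rule_format, of "Suc k" "Suc k'" u v] by simp
    qed
    moreover have "\<forall>u\<in>B. \<forall>v\<in>B \<union> \<Union>(set xs). (u, v) \<notin> R"
    proof (intro ballI notI)
      fix u v assume "u \<in> B" "v \<in> B \<union> \<Union>(set xs)" "(u, v) \<in> R"
      obtain k' where "k' < length (B # xs)" "v \<in> (B # xs) ! k'"
      proof (cases "v \<in> B")
        case True thus ?thesis using that[of 0] by simp
      next
        case False
        then obtain i where "i < length xs" "v \<in> xs ! i" using \<open>v \<in> B \<union> \<Union>(set xs)\<close> by (auto simp: in_set_conv_nth)
        thus ?thesis using that[of "Suc i"] by simp
      qed
      thus False using h[rule_format, of 0 k' u v] \<open>u \<in> B\<close> \<open>(u, v) \<in> R\<close> by simp
    qed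
    ultimately show "bwd R (B # xs)" by simp
  qed
qed


definition fib :: "nat \<Rightarrow> (nat \<Rightarrow> nat) \<Rightarrow> nat \<Rightarrow> nat set" where
  "fib n \<kappa> j = {i\<in>{1..n}. \<kappa> i = j}"

definition Kset :: "nat \<Rightarrow> nat list \<Rightarrow> (nat \<Rightarrow> nat) set" where
  "Kset n g = {\<kappa>\<in>{1..n} \<rightarrow>\<^sub>E {1..}. \<forall>j. card (fib n \<kappa> j) = ex g j}"

definition Fk :: "nat \<Rightarrow> nat \<Rightarrow> (nat \<Rightarrow> nat) \<Rightarrow> nat set list" where
  "Fk n L \<kappa> = map (\<lambda>k. fib n \<kappa> (L - k)) [0..<L]"

definition Gk :: "nat \<Rightarrow> nat set list \<Rightarrow> nat \<Rightarrow> nat" where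
  "Gk n xs = (\<lambda>i. if i \<in> {1..n} then length xs - idx xs i else undefined)"

definition Oset :: "nat \<Rightarrow> nat list \<Rightarrow> nat set list set" where
  "Oset n g = {xs\<in>osp {1..n}. map card xs = rev g}"

lemma K_range:
  assumes k: "\<kappa> \<in> Kset n g" and i: "i \<in> {1..n}"
  shows "1 \<le> \<kappa> i \<and> \<kappa> i \<le> length g"
proof -
  have "i \<in> fib n \<kappa> (\<kappa> i)" using i by (simp add: fib_def)
  moreover have "finite (fib n \<kappa> (\<kappa> i))" by (simp add: fib_def)
  ultimately have "card (fib n \<kappa> (\<kappa> i)) \<noteq> 0" by auto
  hence "ex g (\<kappa> i) \<noteq> 0" using k by (simp add: Kset_def)
  thus ?thesis by (simp add: ex_def split: if_splits)
qed

lemma Fk_in: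
  assumes g: "g \<in> comps n" and k: "\<kappa> \<in> Kset n g"
  shows "Fk n (length g) \<kappa> \<in> Oset n g"
proof -
  let ?L = "length g"
  let ?xs = "Fk n ?L \<kappa>"
  have len: "length ?xs = ?L" by (simp add: Fk_def)
  have nth: "\<And>k. k < ?L \<Longrightarrow> ?xs ! k = fib n \<kappa> (?L - k)" by (simp add: Fk_def)
  have cardk: "\<And>k. k < ?L \<Longrightarrow> card (?xs ! k) = g ! (?L - Suc k)"
    using k nth by (auto simp: Kset_def ex_def)
  have mc: "map card ?xs = rev g"
    by (rule nth_equalityI) (auto simp: len cardk rev_nth)
  have pos: "\<forall>x\<in>set g. 0 < x" using g by (simp add: comps_def)
  have ne: "{} \<notin> set ?xs"
  proof
    assume "{} \<in> set ?xs"
    then obtain k where "k < ?L" "?xs ! k = {}" using len by (auto simp: in_set_conv_nth)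
    hence "g ! (?L - Suc k) = 0" using cardk by fastforce
    moreover have "?L - Suc k < ?L" using \<open>k < ?L\<close> by simp
    ultimately show False using pos nth_mem[of "?L - Suc k" g] by auto
  qed
  have d: "disj ?xs"
  proof (rule disj_from_nth)
    fix k k' assume "k < length ?xs" "k' < length ?xs" "k \<noteq> k'"
    thus "?xs ! k \<inter> ?xs ! k' = {}" using len nth by (auto simp: fib_def)
  qed
  have u: "\<Union>(set ?xs) = {1..n}"
  proof
    show "\<Union>(set ?xs) \<subseteq> {1..n}" by (auto simp: Fk_def fib_def)
    show "{1..n} \<subseteq> \<Union>(set ?xs)"
    proof
      fix i assume i: "i \<in> {1..n}"
      have r: "1 \<le> \<kappa> i" "\<kappa> i \<le> ?L" using K_range[OF k i] by auto
      hence "?L - \<kappa> i < ?L" by simp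
      moreover have "i \<in> ?xs ! (?L - \<kappa> i)" using nth[OF \<open>?L - \<kappa> i < ?L\<close>] r i by (simp add: fib_def)
      ultimately show "i \<in> \<Union>(set ?xs)" using len by (metis UnionI nth_mem)
    qed
  qed
  show ?thesis using mc ne d u by (simp add: Oset_def osp_def)
qed

lemma Oset_len: "xs \<in> Oset n g \<Longrightarrow> length xs = length g"
  by (auto simp: Oset_def dest: arg_cong[where f = length])

lemma fib_Gk:
  assumes xs: "xs \<in> Oset n g"
  shows "fib n (Gk n xs) j = (if 1 \<le> j \<and> j \<le> length g then xs ! (length g - j) else {})"
proof -
  let ?L = "length g"
  have o: "xs \<in> osp {1..n}" and len: "length xs = ?L" using xs Oset_len[OF xs] by (auto simp: Oset_def)
  have sub: "\<And>k. k < ?L \<Longrightarrow> xs ! k \<subseteq> {1..n}"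
  proof -
    fix k assume "k < ?L"
    hence "xs ! k \<in> set xs" using len by simp
    hence "xs ! k \<subseteq> \<Union>(set xs)" by blast
    thus "xs ! k \<subseteq> {1..n}" using o by (simp add: osp_def)
  qed
  show ?thesis
  proof (cases "1 \<le> j \<and> j \<le> ?L")
    case True
    have "fib n (Gk n xs) j = xs ! (?L - j)"
    proof
      show "fib n (Gk n xs) j \<subseteq> xs ! (?L - j)"
      proof
        fix i assume "i \<in> fib n (Gk n xs) j"
        hence i: "i \<in> {1..n}" "?L - idx xs i = j" using len by (auto simp: fib_def Gk_def)
        have "idx xs i < ?L" "i \<in> xs ! idx xs i" using idx_prop[OF o i(1)] len by auto
        moreover have "idx xs i = ?L - j" using i(2) True \<open>idx xs i < ?L\<close> by simp
        ultimately show "i \<in> xs ! (?L - j)" by simp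
      qed
      show "xs ! (?L - j) \<subseteq> fib n (Gk n xs) j"
      proof
        fix i assume i: "i \<in> xs ! (?L - j)"
        have lt: "?L - j < ?L" using True by arith
        hence "i \<in> {1..n}" using sub i by blast
        moreover have "idx xs i = ?L - j" using idx_unique[OF o] lt len i by simp
        ultimately show "i \<in> fib n (Gk n xs) j" using True len by (simp add: fib_def Gk_def)
      qed
    qed
    thus ?thesis using True by simp
  next
    case False
    have "fib n (Gk n xs) j = {}"
    proof (rule equals0I)
      fix i assume "i \<in> fib n (Gk n xs) j"
      hence i: "i \<in> {1..n}" "?L - idx xs i = j" using len by (auto simp: fib_def Gk_def)
      have "idx xs i < ?L" using idx_prop[OF o i(1)] len by auto
      thus False using i(2) False by auto
    qed
    thus ?thesis by (simp only: if_not_P[OF False])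
  qed
qed

lemma Gk_in:
  assumes g: "g \<in> comps n" and xs: "xs \<in> Oset n g"
  shows "Gk n xs \<in> Kset n g"
proof -
  let ?L = "length g"
  have o: "xs \<in> osp {1..n}" and len: "length xs = ?L" using xs Oset_len[OF xs] by (auto simp: Oset_def)
  have mc: "map card xs = rev g" using xs by (simp add: Oset_def)
  have pi: "Gk n xs \<in> {1..n} \<rightarrow>\<^sub>E {1..}"
  proof
    fix i assume "i \<in> {1..n}"
    thus "Gk n xs i \<in> {1..}" using idx_prop[OF o, of i] len by (simp add: Gk_def Suc_le_eq)
  qed (auto simp: Gk_def)
  have "\<And>j. card (fib n (Gk n xs) j) = ex g j"
  proof -
    fix j
    show "card (fib n (Gk n xs) j) = ex g j"
    proof (cases "1 \<le> j \<and> j \<le> ?L")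
      case True
      have "?L - j < length xs" using len True by arith
      hence "card (xs ! (?L - j)) = (map card xs) ! (?L - j)" by simp
      also have "\<dots> = g ! (j - 1)"
      proof -
        have lt: "?L - j < ?L" using True by arith
        have "rev g ! (?L - j) = g ! (?L - Suc (?L - j))" using lt by (simp add: rev_nth)
        moreover have "?L - Suc (?L - j) = j - 1" using True by arith
        ultimately show ?thesis using mc by simp
      qed
      finally show ?thesis using True fib_Gk[OF xs, of j] by (simp add: ex_def)
    next
      case False
      hence "fib n (Gk n xs) j = {}" using fib_Gk[OF xs, of j] by (simp only: if_not_P[OF False] if_False)
      moreover have "ex g j = 0" unfolding ex_def by (simp only: if_not_P[OF False] if_False)
      ultimately show ?thesis by simp
    qed
  qed
  thus ?thesis using pi by (simp add: Kset_def)
qed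

lemma Fk_Gk: "g \<in> comps n \<Longrightarrow> xs \<in> Oset n g \<Longrightarrow> Fk n (length g) (Gk n xs) = xs"
proof -
  assume g: "g \<in> comps n" and xs: "xs \<in> Oset n g"
  have len: "length xs = length g" using Oset_len[OF xs] .
  show ?thesis
  proof (rule nth_equalityI)
    show "length (Fk n (length g) (Gk n xs)) = length xs" using len by (simp add: Fk_def)
    fix k assume "k < length (Fk n (length g) (Gk n xs))"
    hence k: "k < length g" by (simp add: Fk_def)
    thus "Fk n (length g) (Gk n xs) ! k = xs ! k" using fib_Gk[OF xs, of "length g - k"] by (simp add: Fk_def Suc_le_eq)
  qed
qed

lemma Gk_Fk: "g \<in> comps n \<Longrightarrow> \<kappa> \<in> Kset n g \<Longrightarrow> Gk n (Fk n (length g) \<kappa>) = \<kappa>"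
proof
  fix i assume g: "g \<in> comps n" and k: "\<kappa> \<in> Kset n g"
  let ?L = "length g" and ?xs = "Fk n (length g) \<kappa>"
  have o: "?xs \<in> osp {1..n}" using Fk_in[OF g k] by (simp add: Oset_def)
  show "Gk n ?xs i = \<kappa> i"
  proof (cases "i \<in> {1..n}")
    case True
    have r: "1 \<le> \<kappa> i" "\<kappa> i \<le> ?L" using K_range[OF k True] by auto
    have "i \<in> ?xs ! (?L - \<kappa> i)" using r True by (simp add: Fk_def fib_def)
    hence "idx ?xs i = ?L - \<kappa> i" using idx_unique[OF o] r by (simp add: Fk_def)
    thus ?thesis using True r by (simp add: Gk_def Fk_def)
  next
    case False
    thus ?thesis using k by (auto simp: Gk_def Kset_def PiE_def extensional_def)
  qed
qed

lemma strict_bwd: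
  assumes g: "g \<in> comps n" and k: "\<kappa> \<in> Kset n g" and R: "R \<subseteq> {1..n} \<times> {1..n}"
  shows "(\<forall>(u, v)\<in>R. \<kappa> u < \<kappa> v) = bwd R (Fk n (length g) \<kappa>)"
proof -
  let ?L = "length g" and ?xs = "Fk n (length g) \<kappa>"
  have nth: "\<And>k. k < ?L \<Longrightarrow> ?xs ! k = fib n \<kappa> (?L - k)" by (simp add: Fk_def)
  have len: "length ?xs = ?L" by (simp add: Fk_def)
  show ?thesis
  proof
    assume s: "\<forall>(u, v)\<in>R. \<kappa> u < \<kappa> v"
    show "bwd R ?xs" unfolding bwd_nth
    proof (intro allI impI)
      fix kk kk' u v assume h: "kk < length ?xs" "kk' < length ?xs" "u \<in> ?xs ! kk" "v \<in> ?xs ! kk'" "(u, v) \<in> R"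
      have "\<kappa> u = ?L - kk" "\<kappa> v = ?L - kk'" using h nth len by (auto simp: fib_def)
      moreover have "\<kappa> u < \<kappa> v" using s h(5) by auto
      ultimately show "kk' < kk" using h len by simp
    qed
  next
    assume b: "bwd R ?xs"
    show "\<forall>(u, v)\<in>R. \<kappa> u < \<kappa> v"
    proof (intro ballI, clarify)
      fix u v assume uv: "(u, v) \<in> R"
      have u: "u \<in> {1..n}" and v: "v \<in> {1..n}" using uv R by auto
      have ru: "1 \<le> \<kappa> u" "\<kappa> u \<le> ?L" using K_range[OF k u] by auto
      have rv: "1 \<le> \<kappa> v" "\<kappa> v \<le> ?L" using K_range[OF k v] by auto
      have "u \<in> ?xs ! (?L - \<kappa> u)" "v \<in> ?xs ! (?L - \<kappa> v)" using nth ru rv u v by (auto simp: fib_def)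
      hence "?L - \<kappa> v < ?L - \<kappa> u" using b[unfolded bwd_nth, rule_format, of "?L - \<kappa> u" "?L - \<kappa> v" u v] uv ru rv len by simp
      thus "\<kappa> u < \<kappa> v" using ru rv by simp
    qed
  qed
qed

lemma card_strict:
  assumes g: "g \<in> comps n" and R: "R \<subseteq> {1..n} \<times> {1..n}"
  shows "card {\<kappa>\<in>Kset n g. \<forall>(u, v)\<in>R. \<kappa> u < \<kappa> v} = card {xs\<in>Oset n g. bwd R xs}"
proof -
  let ?F = "Fk n (length g)"
  have inj: "inj_on ?F (Kset n g)" by (rule inj_on_inverseI[where g = "Gk n"]) (rule Gk_Fk[OF g])
  have img: "?F ` {\<kappa>\<in>Kset n g. \<forall>(u, v)\<in>R. \<kappa> u < \<kappa> v} = {xs\<in>Oset n g. bwd R xs}"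
  proof
    show "?F ` {\<kappa>\<in>Kset n g. \<forall>(u, v)\<in>R. \<kappa> u < \<kappa> v} \<subseteq> {xs\<in>Oset n g. bwd R xs}"
    proof
      fix xs assume "xs \<in> ?F ` {\<kappa>\<in>Kset n g. \<forall>(u, v)\<in>R. \<kappa> u < \<kappa> v}"
      then obtain \<kappa> where k: "\<kappa> \<in> Kset n g" "\<forall>(u, v)\<in>R. \<kappa> u < \<kappa> v" "xs = ?F \<kappa>" by blast
      have "xs \<in> Oset n g" using Fk_in[OF g k(1)] k(3) by simp
      moreover have "bwd R xs" using strict_bwd[OF g k(1) R] k(2,3) by simp
      ultimately show "xs \<in> {xs\<in>Oset n g. bwd R xs}" by simp
    qed
    show "{xs\<in>Oset n g. bwd R xs} \<subseteq> ?F ` {\<kappa>\<in>Kset n g. \<forall>(u, v)\<in>R. \<kappa> u < \<kappa> v}"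
    proof
      fix xs assume xs: "xs \<in> {xs\<in>Oset n g. bwd R xs}"
      have G: "Gk n xs \<in> Kset n g" using Gk_in[OF g] xs by simp
      have "?F (Gk n xs) = xs" using Fk_Gk[OF g] xs by simp
      moreover have "\<forall>(u, v)\<in>R. Gk n xs u < Gk n xs v" using strict_bwd[OF g G R] xs \<open>?F (Gk n xs) = xs\<close> by simp
      ultimately show "xs \<in> ?F ` {\<kappa>\<in>Kset n g. \<forall>(u, v)\<in>R. \<kappa> u < \<kappa> v}" using G
        by (intro image_eqI[of xs ?F "Gk n xs"]) auto
    qed
  qed
  have inj2: "inj_on ?F {\<kappa>\<in>Kset n g. \<forall>(u, v)\<in>R. \<kappa> u < \<kappa> v}" using inj by (rule inj_on_subset) auto
  have "card (?F ` {\<kappa>\<in>Kset n g. \<forall>(u, v)\<in>R. \<kappa> u < \<kappa> v}) = card {\<kappa>\<in>Kset n g. \<forall>(u, v)\<in>R. \<kappa> u < \<kappa> v}"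
    by (rule card_image[OF inj2])
  thus ?thesis unfolding img by simp
qed


lemma const2_mult: "const2 a * const2 b = const2 (a * b)" by (simp add: const2_def)
lemma const2_add: "const2 a + const2 b = const2 (a + b)" by (simp add: const2_def)
lemma const2_of_int: "const2 (of_int k) = of_int k" by (simp add: const2_def of_int_poly)
lemma const2_of_nat: "const2 (of_nat k) = of_nat k" by (simp add: const2_def of_nat_poly)
lemma const2_0: "const2 0 = 0" by (simp add: const2_def)
lemma const2_1: "const2 1 = 1" by (simp add: const2_def one_pCons)
lemma const2_eq0: "(const2 a = 0) = (a = 0)" by (simp add: const2_def)
lemma const2_sum: "const2 (\<Sum>x\<in>A. f x) = (\<Sum>x\<in>A. const2 (f x))"
  by (induction A rule: infinite_finite_induct) (auto simp: const2_0 const2_add[symmetric])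

lemma yvar_pow: "(yvar::rpoly2) ^ a = monom 1 a" by (simp add: yvar_def monom_power)
lemma zvar_pow: "(zvar::rpoly2) ^ b = [:monom 1 b:]" unfolding zvar_def by (induction b) (auto simp: monom_power mult_monom)
lemma yz_monom: "(yvar::rpoly2) ^ a * zvar ^ b * of_nat m = monom (monom (of_nat m) b) a"
  unfolding yvar_pow zvar_pow by (simp add: of_nat_poly monom_0 mult_monom smult_monom)

lemma in_Nyz_0: "in_Nyz 0" by (simp add: in_Nyz_def)
lemma in_Nyz_add: "in_Nyz p \<Longrightarrow> in_Nyz q \<Longrightarrow> in_Nyz (p + q)" by (simp add: in_Nyz_def)
lemma in_Nyz_monom: "in_Nyz ((yvar::rpoly2) ^ a * zvar ^ b * of_nat m)"
  unfolding yz_monom in_Nyz_def by (simp add: coeff_monom)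
lemma in_Nyz_sum_list: "(\<And>x. x \<in> set xs \<Longrightarrow> in_Nyz (f x)) \<Longrightarrow> in_Nyz (sum_list (map f xs))"
  by (induction xs) (auto simp: in_Nyz_0 in_Nyz_add)

lemma pi_comp_pos: "\<forall>x\<in>set g. (0::nat) < x \<Longrightarrow> 0 < pi_comp g"
  by (simp add: pi_comp_def psum_Suc_pos)

lemma pi_pair_pos: "\<forall>x\<in>set a. (0::nat) < x \<Longrightarrow> 0 < pi_pair a b"
proof -
  assume pos: "\<forall>x\<in>set a. (0::nat) < x"
  have "\<And>i. \<forall>x\<in>set (subcomp a b i). 0 < x" using pos by (auto simp: subcomp_def)
  thus ?thesis by (simp add: pi_pair_def pi_comp_pos)
qed

lemma zee_pos: "\<forall>x\<in>set a. (0::nat) < x \<Longrightarrow> 0 < zee a"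
  by (simp add: zee_def)

lemma Psicoef_ex:
  assumes a: "a \<in> comps n" and b: "b \<in> comps n"
  shows "Psicoef n a (ex b) = const2 (of_nat (zee a)) * (if comp_le a b then const2 (inverse (of_nat (pi_pair a b))) else 0)"
proof -
  have fin: "finite (comps n)" using bij_betw_finite[OF Sset_bij] by simp
  have "(\<Sum>\<beta>\<in>{\<beta>\<in>comps n. comp_le a \<beta>}. const2 (inverse (of_nat (pi_pair a \<beta>))) * of_nat (Mcoef \<beta> (ex b)))
      = (\<Sum>\<beta>\<in>{\<beta>\<in>comps n. comp_le a \<beta>}. if \<beta> = b then const2 (inverse (of_nat (pi_pair a \<beta>))) else 0)"
    using Mcoef_ex[OF comps_pos comps_pos[OF b]] by (intro sum.cong refl) auto
  also have "\<dots> = (if comp_le a b then const2 (inverse (of_nat (pi_pair a b))) else 0)"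
    using fin b by (subst sum.delta) auto
  finally show ?thesis by (simp add: Psicoef_def)
qed

lemma Psi_term:
  assumes a: "a \<in> comps n" and b: "b \<in> comps n"
  shows "x * const2 (inverse (of_nat (zee a))) * Psicoef n a (ex b) = (if comp_le a b then x * const2 (inverse (of_nat (pi_pair a b))) else 0)"
proof -
  have z: "zee a \<noteq> 0" using zee_pos[OF comps_pos[OF a]] by simp
  have "const2 (inverse (of_nat (zee a))) * const2 (of_nat (zee a)) = 1"
    using z by (simp add: const2_mult const2_1)
  thus ?thesis unfolding Psicoef_ex[OF a b] by (simp add: mult.assoc[symmetric])
qed

lemma strict_finer_len:
  assumes a: "a \<in> comps n" and b: "b \<in> comps n" and le: "comp_le a b" and ne: "a \<noteq> b"
  shows "length b < length a"
proof -
  have "Sset b \<subset> Sset a" using le ne Sset_inj[OF a b] by (auto simp: comp_le_def)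
  moreover have "finite (Sset a)" using Sset_sub[OF a] finite_subset by blast
  ultimately have "card (Sset b) < card (Sset a)" by (rule psubset_card_mono[rotated])
  hence "length b - 1 < length a - 1" using card_Sset[OF comps_pos[OF a]] card_Sset[OF comps_pos[OF b]] by simp
  thus ?thesis by simp
qed

lemma comps_len: "a \<in> comps n \<Longrightarrow> length a \<le> n"
proof -
  assume a: "a \<in> comps n"
  have "sum_list (map (\<lambda>_. 1::nat) a) \<le> sum_list a"
    using comps_pos[OF a] sum_list_mono[of a "\<lambda>_. 1::nat" "\<lambda>x. x"] by (simp add: Suc_le_eq)
  thus ?thesis using comps_sum[OF a] by (simp add: sum_list_triv)
qed

lemma triangular:
  assumes h: "\<forall>b\<in>comps n. (\<Sum>a\<in>comps n. if comp_le a b then \<delta> a * const2 (inverse (of_nat (pi_pair a b))) else 0) = (0::rpoly2)"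
  shows "a \<in> comps n \<Longrightarrow> \<delta> a = 0"
proof -
  have fin: "finite (comps n)" using bij_betw_finite[OF Sset_bij] by simp
  have "\<forall>a\<in>comps n. n - length a = k \<longrightarrow> \<delta> a = 0" for k
  proof (induction k rule: less_induct)
    case (less k)
    show ?case
    proof (intro ballI impI)
      fix a assume a: "a \<in> comps n" and k: "n - length a = k"
      have others: "\<And>a'. a' \<in> comps n \<Longrightarrow> comp_le a' a \<Longrightarrow> a' \<noteq> a \<Longrightarrow> \<delta> a' = 0"
      proof -
        fix a' assume a': "a' \<in> comps n" "comp_le a' a" "a' \<noteq> a"
        have "length a < length a'" by (rule strict_finer_len[OF a'(1) a a'(2,3)])
        moreover have "length a' \<le> n" by (rule comps_len[OF a'(1)])
        ultimately have "n - length a' < k" using k by simp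
        thus "\<delta> a' = 0" using less.IH a'(1) by blast
      qed
      have "(\<Sum>a'\<in>comps n. if comp_le a' a then \<delta> a' * const2 (inverse (of_nat (pi_pair a' a))) else 0)
          = (\<Sum>a'\<in>comps n. if a' = a then \<delta> a' * const2 (inverse (of_nat (pi_pair a' a))) else 0)"
        using others by (intro sum.cong refl) (auto simp: comp_le_def)
      also have "\<dots> = \<delta> a * const2 (inverse (of_nat (pi_pair a a)))" using fin a by simp
      finally have "\<delta> a * const2 (inverse (of_nat (pi_pair a a))) = 0" using h a by simp
      moreover have "const2 (inverse (of_nat (pi_pair a a))) \<noteq> 0"
        using pi_pair_pos[OF comps_pos[OF a], of a] by (simp add: const2_eq0)
      ultimately show "\<delta> a = 0" by simp
    qed
  qed
  thus "a \<in> comps n \<Longrightarrow> \<delta> a = 0" by blast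
qed


lemma alt_pow:
  assumes f: "finite M" and W: "W \<subseteq> M"
  shows "(\<Sum>U\<in>{U\<in>Pow M. W \<subseteq> U}. (-1::int) ^ (card M - card U)) = (if W = M then 1 else 0)"
proof -
  have fW: "finite W" "finite (M - W)" using f W finite_subset by auto
  have b: "bij_betw (\<lambda>U'. W \<union> U') (Pow (M - W)) {U\<in>Pow M. W \<subseteq> U}"
    by (rule bij_betw_byWitness[where f' = "\<lambda>U. U - W"]) (use W in auto)
  have "(\<Sum>U\<in>{U\<in>Pow M. W \<subseteq> U}. (-1::int) ^ (card M - card U))
      = (\<Sum>U'\<in>Pow (M - W). (-1::int) ^ (card M - card (W \<union> U')))"
    by (rule sum.reindex_bij_betw[OF b, symmetric])
  also have "\<dots> = (\<Sum>U'\<in>Pow (M - W). (-1::int) ^ (card (M - W) - card U'))"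
  proof (rule sum.cong[OF refl])
    fix U' assume U': "U' \<in> Pow (M - W)"
    have "finite U'" using U' fW finite_subset by auto
    hence "card (W \<union> U') = card W + card U'" using U' fW by (subst card_Un_disjoint) auto
    moreover have "card M = card W + card (M - W)" using f W by (metis card_Diff_subset card_mono diff_add_inverse le_add_diff_inverse fW(1))
    moreover have "card U' \<le> card (M - W)" using U' fW by (intro card_mono) auto
    ultimately show "(-1::int) ^ (card M - card (W \<union> U')) = (-1) ^ (card (M - W) - card U')" by simp
  qed
  also have "\<dots> = (\<Prod>x\<in>M - W. (1::int) - 1)"
  proof -
    have e: "(\<Prod>x\<in>M - W. (1::int) - 1) = (\<Sum>U'\<in>Pow (M - W). (-1::int) ^ (card (M - W) - card U') * prod (\<lambda>_. 1) U' * prod (\<lambda>_. 1) (M - W - U'))"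
      by (rule prod_diff_conv_sum'[OF fW(2)])
    show ?thesis unfolding e by simp
  qed
  also have "\<dots> = (if W = M then 1 else 0)" using W fW by (auto simp: card_eq_0_iff)
  finally show ?thesis .
qed

lemma omega_iff:
  assumes S: "S \<subseteq> {1..<n}" and T: "T \<subseteq> {1..<n}"
  shows "(omega_set n S \<subseteq> T) = (S \<union> (\<lambda>s. n - s) ` T = {1..<n})"
proof
  assume h: "omega_set n S \<subseteq> T"
  show "S \<union> (\<lambda>s. n - s) ` T = {1..<n}"
  proof
    show "S \<union> (\<lambda>s. n - s) ` T \<subseteq> {1..<n}" using S T by (auto simp: subset_iff)
    show "{1..<n} \<subseteq> S \<union> (\<lambda>s. n - s) ` T"
    proof
      fix y assume y: "y \<in> {1..<n}"
      show "y \<in> S \<union> (\<lambda>s. n - s) ` T"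
      proof (cases "y \<in> S")
        case False
        have x: "n - y \<in> {1..<n}" using y by auto
        have "n - y \<notin> (\<lambda>s. n - s) ` S"
        proof
          assume "n - y \<in> (\<lambda>s. n - s) ` S"
          then obtain s where "s \<in> S" "n - y = n - s" by blast
          hence "s = y" using S y by auto
          thus False using \<open>s \<in> S\<close> False by simp
        qed
        hence "n - y \<in> T" using h x by (auto simp: omega_set_def)
        moreover have "y = n - (n - y)" using y by auto
        ultimately show ?thesis by blast
      qed simp
    qed
  qed
next
  assume h: "S \<union> (\<lambda>s. n - s) ` T = {1..<n}"
  show "omega_set n S \<subseteq> T"
  proof
    fix x assume x: "x \<in> omega_set n S"
    hence x1: "x \<in> {1..<n}" "x \<notin> (\<lambda>s. n - s) ` S" by (auto simp: omega_set_def)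
    have y: "n - x \<in> {1..<n}" using x1 by auto
    have "n - x \<notin> S"
    proof
      assume "n - x \<in> S"
      moreover have "x = n - (n - x)" using x1 by auto
      ultimately show False using x1(2) by blast
    qed
    hence "n - x \<in> (\<lambda>s. n - s) ` T" using h y by blast
    then obtain t where t: "t \<in> T" "n - x = n - t" by blast
    have "t \<in> {1..<n}" using T t(1) by blast
    hence "x = t" using t(2) x1(1) by auto
    thus "x \<in> T" using t(1) by simp
  qed
qed

lemma omega_alt:
  assumes b: "b \<in> comps n" and S: "S \<subseteq> {1..<n}"
  shows "(if omega_set n S \<subseteq> Sset b then 1 else 0 :: int)
       = (\<Sum>g\<in>{g\<in>comps n. comp_le g (rev b)}. (-1) ^ (n - length g) * (if S \<subseteq> Sset g then 1 else 0))"
proof -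
  let ?M = "{1..<n}" and ?V = "Sset (rev b)"
  have V: "?V = (\<lambda>s. n - s) ` Sset b" using Sset_rev comps_sum[OF b] by simp
  have Vsub: "?V \<subseteq> ?M" using V Sset_sub[OF b] by (auto simp: subset_iff)
  have rb: "rev b \<in> comps n" using b by (simp add: comps_def)
  have "(\<Sum>g\<in>{g\<in>comps n. comp_le g (rev b)}. (-1::int) ^ (n - length g) * (if S \<subseteq> Sset g then 1 else 0))
      = (\<Sum>g\<in>{g\<in>comps n. ?V \<subseteq> Sset g}. (-1::int) ^ (card ?M - card (Sset g)) * (if S \<subseteq> Sset g then 1 else 0))"
  proof (intro sum.cong)
    show "{g\<in>comps n. comp_le g (rev b)} = {g\<in>comps n. ?V \<subseteq> Sset g}" by (simp add: comp_le_def)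
    fix g assume g: "g \<in> {g\<in>comps n. ?V \<subseteq> Sset g}"
    have "n - length g = card ?M - card (Sset g)"
    proof (cases "n = 0")
      case True thus ?thesis using comps_len[of g n] g by simp
    next
      case False
      hence "g \<noteq> []" using g comps_sum[of g n] by auto
      thus ?thesis using card_Sset[OF comps_pos[of g n]] g by (cases g) auto
    qed
    thus "(-1::int) ^ (n - length g) * (if S \<subseteq> Sset g then 1 else 0) = (-1) ^ (card ?M - card (Sset g)) * (if S \<subseteq> Sset g then 1 else 0)"
      by simp
  qed
  also have "\<dots> = (\<Sum>U\<in>{U\<in>Pow ?M. ?V \<subseteq> U}. (-1::int) ^ (card ?M - card U) * (if S \<subseteq> U then 1 else 0))"
  proof -
    have bb: "bij_betw Sset {g\<in>comps n. ?V \<subseteq> Sset g} {U\<in>Pow ?M. ?V \<subseteq> U}"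
    proof (rule bij_betw_subset[OF Sset_bij[of n]])
      show "{g\<in>comps n. ?V \<subseteq> Sset g} \<subseteq> comps n" by blast
      show "Sset ` {g\<in>comps n. ?V \<subseteq> Sset g} = {U\<in>Pow ?M. ?V \<subseteq> U}"
      proof
        show "Sset ` {g\<in>comps n. ?V \<subseteq> Sset g} \<subseteq> {U\<in>Pow ?M. ?V \<subseteq> U}" using Sset_sub by blast
        show "{U\<in>Pow ?M. ?V \<subseteq> U} \<subseteq> Sset ` {g\<in>comps n. ?V \<subseteq> Sset g}"
        proof
          fix U assume U: "U \<in> {U\<in>Pow ?M. ?V \<subseteq> U}"
          then obtain g where "g \<in> comps n" "Sset g = U" using Sset_surj[of U n] by auto
          thus "U \<in> Sset ` {g\<in>comps n. ?V \<subseteq> Sset g}" using U by blast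
        qed
      qed
    qed
    show ?thesis by (rule sum.reindex_bij_betw[OF bb])
  qed
  also have "\<dots> = (\<Sum>U\<in>{U\<in>Pow ?M. ?V \<subseteq> U}. if S \<subseteq> U then (-1::int) ^ (card ?M - card U) else 0)"
    by (intro sum.cong refl) auto
  also have "\<dots> = (\<Sum>U\<in>{U\<in>{U\<in>Pow ?M. ?V \<subseteq> U}. S \<subseteq> U}. (-1::int) ^ (card ?M - card U))"
    by (rule sum.inter_filter[symmetric]) auto
  also have "\<dots> = (\<Sum>U\<in>{U\<in>Pow ?M. S \<union> ?V \<subseteq> U}. (-1::int) ^ (card ?M - card U))"
    by (rule sum.cong) auto
  also have "\<dots> = (if S \<union> ?V = ?M then 1 else 0)" using S Vsub by (intro alt_pow) auto
  finally have r: "(\<Sum>g\<in>{g\<in>comps n. comp_le g (rev b)}. (-1::int) ^ (n - length g) * (if S \<subseteq> Sset g then 1 else 0))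
      = (if S \<union> ?V = ?M then 1 else 0)" .
  have "(S \<union> ?V = ?M) = (omega_set n S \<subseteq> Sset b)" using omega_iff[OF S Sset_sub[OF b]] V by simp
  thus ?thesis using r by simp
qed


lemma bwd_acyclic:
  assumes R: "R \<subseteq> V \<times> V" and xs: "xs \<in> osp V" and b: "bwd R xs"
  shows "acyclic R"
proof -
  have st1: "\<And>u v. (u, v) \<in> R \<Longrightarrow> idx xs v < idx xs u"
  proof -
    fix u v assume uv: "(u, v) \<in> R"
    hence "u \<in> V" "v \<in> V" using R by auto
    thus "idx xs v < idx xs u" using idx_prop[OF xs] b[unfolded bwd_nth] uv by blast
  qed
  have "\<And>u v. (u, v) \<in> R\<^sup>+ \<Longrightarrow> idx xs v < idx xs u"
  proof -
    fix u v assume "(u, v) \<in> R\<^sup>+"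
    thus "idx xs v < idx xs u"
    proof (induction rule: trancl_induct)
      case (base y) thus ?case by (rule st1)
    next
      case (step y z) thus ?case using st1[of y z] by simp
    qed
  qed
  thus ?thesis by (auto simp: acyclic_def)
qed

lemma Lsum_cyclic:
  assumes "R \<subseteq> V \<times> V" "\<not> acyclic R"
  shows "Lsum R V b = 0"
  unfolding Lsum_def using bwd_acyclic[OF assms(1)] assms(2) by (intro sum.neutral) auto

lemma finite_comps: "finite (comps n)"
  using bij_betw_finite[OF Sset_bij] by simp

lemma osp_comps: "xs \<in> osp {1..n} \<Longrightarrow> map card xs \<in> comps n"
  using osp_pos[of "{1..n}" xs] osp_card_sum[of "{1..n}" xs] by (simp add: comps_def)

lemma refines_comp_le:
  "a \<in> comps n \<Longrightarrow> b \<in> comps n \<Longrightarrow> refines a b = comp_le a b"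
  using refines_iff[OF comps_pos comps_pos] comps_sum by (simp add: comp_le_def)

lemma Lsum_as_comps:
  assumes b: "b \<in> comps n"
  shows "Lsum R {1..n} b = (\<Sum>g\<in>{g\<in>comps n. comp_le g (rev b)}. (-1) ^ (n - length g) * int (card {xs\<in>Oset n g. bwd R xs}))"
proof -
  let ?f = "\<lambda>xs. if refines (map card xs) b then (if bwd R xs then (-1::int) ^ (card {1..n} - length xs) else 0) else 0"
  have rb: "rev b \<in> comps n" using b by (simp add: comps_def)
  have fo: "finite (osp {1..n})" by (simp add: finite_osp)
  have "Lsum R {1..n} b = (\<Sum>g\<in>comps n. \<Sum>xs\<in>{xs\<in>osp {1..n}. rev (map card xs) = g}. ?f xs)"
    unfolding Lsum_def
    by (rule sum.group[symmetric]) (use fo finite_comps osp_comps in \<open>auto simp: comps_def\<close>)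
  also have "\<dots> = (\<Sum>g\<in>comps n. if comp_le g (rev b) then (-1) ^ (n - length g) * int (card {xs\<in>Oset n g. bwd R xs}) else 0)"
  proof (rule sum.cong[OF refl])
    fix g assume g: "g \<in> comps n"
    have "(\<Sum>xs\<in>{xs\<in>osp {1..n}. rev (map card xs) = g}. ?f xs)
        = (\<Sum>xs\<in>Oset n g. if comp_le g (rev b) then (if bwd R xs then (-1::int) ^ (n - length g) else 0) else 0)"
    proof (rule sum.cong)
      show "{xs\<in>osp {1..n}. rev (map card xs) = g} = Oset n g" by (auto simp: Oset_def)
      fix xs assume xs: "xs \<in> Oset n g"
      have mc: "map card xs = rev g" and o: "xs \<in> osp {1..n}" using xs by (auto simp: Oset_def)
      have rg: "rev g \<in> comps n" using g by (simp add: comps_def)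
      have "refines (map card xs) b = comp_le (rev g) b" using refines_comp_le[OF rg b] mc by simp
      also have "\<dots> = comp_le g (rev b)" using comp_le_rev[OF g rb] by simp
      finally show "?f xs = (if comp_le g (rev b) then (if bwd R xs then (-1::int) ^ (n - length g) else 0) else 0)"
        using Oset_len[OF xs] by simp
    qed
    also have "\<dots> = (if comp_le g (rev b) then (-1) ^ (n - length g) * int (card {xs\<in>Oset n g. bwd R xs}) else 0)"
    proof -
      have fO: "finite (Oset n g)" using fo by (simp add: Oset_def)
      have "(\<Sum>xs\<in>Oset n g. if bwd R xs then (-1::int) ^ (n - length g) else 0) = (\<Sum>xs\<in>{xs\<in>Oset n g. bwd R xs}. (-1::int) ^ (n - length g))"
        by (rule sum.inter_filter[symmetric, OF fO])
      thus ?thesis by simp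
    qed
    finally show "(\<Sum>xs\<in>{xs\<in>osp {1..n}. rev (map card xs) = g}. ?f xs) = \<dots>" .
  qed
  also have "\<dots> = (\<Sum>g\<in>{g\<in>comps n. comp_le g (rev b)}. (-1) ^ (n - length g) * int (card {xs\<in>Oset n g. bwd R xs}))"
    using finite_comps by (simp add: sum.inter_filter)
  finally show ?thesis .
qed

definition rc :: "(nat \<times> nat) set \<Rightarrow> nat \<Rightarrow> nat list \<Rightarrow> nat" where
  "rc R n a = card {xs\<in>osp {1..n}. map card xs = a \<and> wbwd R xs \<and> rooted R xs}"

lemma Rsum_as_comps:
  assumes b: "b \<in> comps n"
  shows "Rsum R {1..n} b = (\<Sum>a\<in>comps n. if comp_le a b then of_nat (rc R n a) * inverse (of_nat (pi_pair a b)) else 0)"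
proof -
  let ?f = "\<lambda>xs. if refines (map card xs) b then (if wbwd R xs \<and> rooted R xs then 1 / of_nat (pi_pair (map card xs) b) else 0) else (0::rat)"
  have fo: "finite (osp {1..n})" by (simp add: finite_osp)
  have "Rsum R {1..n} b = (\<Sum>a\<in>comps n. \<Sum>xs\<in>{xs\<in>osp {1..n}. map card xs = a}. ?f xs)"
    unfolding Rsum_def
    by (rule sum.group[symmetric]) (use fo finite_comps osp_comps in auto)
  also have "\<dots> = (\<Sum>a\<in>comps n. if comp_le a b then of_nat (rc R n a) * inverse (of_nat (pi_pair a b)) else 0)"
  proof (rule sum.cong[OF refl])
    fix a assume a: "a \<in> comps n"
    have fA: "finite {xs\<in>osp {1..n}. map card xs = a}" using fo by simp
    have "(\<Sum>xs\<in>{xs\<in>osp {1..n}. map card xs = a}. ?f xs)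
        = (\<Sum>xs\<in>{xs\<in>osp {1..n}. map card xs = a}. if comp_le a b then (if wbwd R xs \<and> rooted R xs then inverse (of_nat (pi_pair a b)) else 0) else 0)"
      using refines_comp_le[OF a b] by (intro sum.cong refl) (auto simp: inverse_eq_divide)
    also have "\<dots> = (if comp_le a b then (\<Sum>xs\<in>{xs\<in>osp {1..n}. map card xs = a}. if wbwd R xs \<and> rooted R xs then inverse (of_nat (pi_pair a b)) else 0) else 0)"
      by simp
    also have "(\<Sum>xs\<in>{xs\<in>osp {1..n}. map card xs = a}. if wbwd R xs \<and> rooted R xs then inverse (of_nat (pi_pair a b)) else (0::rat))
        = of_nat (rc R n a) * inverse (of_nat (pi_pair a b))"
    proof -
      have "(\<Sum>xs\<in>{xs\<in>osp {1..n}. map card xs = a}. if wbwd R xs \<and> rooted R xs then inverse (of_nat (pi_pair a b)) else (0::rat))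
          = (\<Sum>xs\<in>{xs\<in>{xs\<in>osp {1..n}. map card xs = a}. wbwd R xs \<and> rooted R xs}. inverse (of_nat (pi_pair a b)))"
        by (rule sum.inter_filter[symmetric, OF fA])
      also have "{xs\<in>{xs\<in>osp {1..n}. map card xs = a}. wbwd R xs \<and> rooted R xs} = {xs\<in>osp {1..n}. map card xs = a \<and> wbwd R xs \<and> rooted R xs}"
        by auto
      finally show ?thesis by (simp add: rc_def)
    qed
    finally show "(\<Sum>xs\<in>{xs\<in>osp {1..n}. map card xs = a}. ?f xs) = (if comp_le a b then of_nat (rc R n a) * inverse (of_nat (pi_pair a b)) else 0)" by simp
  qed
  finally show ?thesis .
qed


lemma chs_sub: "set es \<subseteq> A \<times> A \<Longrightarrow> c \<in> set (chs es) \<Longrightarrow> set (fst c) \<subseteq> A \<times> A"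
proof (induction es arbitrary: c)
  case Nil thus ?case by simp
next
  case (Cons e es)
  then obtain c' where c': "c' \<in> set (chs es)" and "c \<in> set ((\<lambda>(R, a, b). [(R, a, b), (e # R, Suc a, b), ((snd e, fst e) # R, a, Suc b)]) c')"
    by auto
  moreover obtain R a b where "c' = (R, a, b)" by (cases c')
  moreover have "set R \<subseteq> A \<times> A" using Cons.IH[OF _ c'] Cons.prems(1) \<open>c' = (R, a, b)\<close> by auto
  moreover have "fst e \<in> A" "snd e \<in> A" using Cons.prems(1) by auto
  ultimately show ?case by auto
qed

lemma sum_list_sum_swap:
  "(\<Sum>x\<in>A. sum_list (map (f x) L)) = sum_list (map (\<lambda>c. \<Sum>x\<in>A. f x c) L)"
  by (induction L) (auto simp: sum.distrib)

lemma finite_Kset: "finite (Kset n g)"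
proof -
  have "Kset n g \<subseteq> {1..n} \<rightarrow>\<^sub>E {1..length g}"
    using K_range by (auto simp: Kset_def PiE_def Pi_def)
  thus ?thesis by (rule finite_subset) (simp add: finite_PiE)
qed

lemma Bcoef_ex:
  assumes g: "g \<in> comps n" and es: "set es \<subseteq> {1..n} \<times> {1..n}"
  shows "Bcoef n (mset es) (yvar + 1) (zvar + 1) (ex g)
       = sum_list (map (\<lambda>c. yvar ^ fst (snd c) * zvar ^ snd (snd c) * of_nat (card {xs\<in>Oset n g. bwd (set (fst c)) xs})) (chs es))"
proof -
  have "Bcoef n (mset es) (yvar + 1) (zvar + 1) (ex g) = (\<Sum>\<kappa>\<in>Kset n g. (yvar + 1) ^ asc (mset es) \<kappa> * (zvar + 1) ^ inv (mset es) \<kappa>)"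
    by (simp add: Bcoef_def Kset_def fib_def)
  also have "\<dots> = (\<Sum>\<kappa>\<in>Kset n g. sum_list (map (wt \<kappa>) (chs es)))" by (simp add: weight_chs)
  also have "\<dots> = sum_list (map (\<lambda>c. \<Sum>\<kappa>\<in>Kset n g. wt \<kappa> c) (chs es))" by (rule sum_list_sum_swap)
  also have "\<dots> = sum_list (map (\<lambda>c. yvar ^ fst (snd c) * zvar ^ snd (snd c) * of_nat (card {xs\<in>Oset n g. bwd (set (fst c)) xs})) (chs es))"
  proof (intro arg_cong[where f = sum_list] map_cong refl)
    fix c assume c: "c \<in> set (chs es)"
    obtain R a b where cR: "c = (R, a, b)" by (cases c)
    have R: "set R \<subseteq> {1..n} \<times> {1..n}" using chs_sub[OF es c] cR by simp
    have "(\<Sum>\<kappa>\<in>Kset n g. wt \<kappa> c) = (\<Sum>\<kappa>\<in>Kset n g. if (\<forall>(u, v)\<in>set R. \<kappa> u < \<kappa> v) then yvar ^ a * zvar ^ b else 0)"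
      by (simp add: wt_def cR)
    also have "\<dots> = (\<Sum>\<kappa>\<in>{\<kappa>\<in>Kset n g. \<forall>(u, v)\<in>set R. \<kappa> u < \<kappa> v}. yvar ^ a * zvar ^ b)"
      by (rule sum.inter_filter[symmetric, OF finite_Kset])
    also have "\<dots> = of_nat (card {\<kappa>\<in>Kset n g. \<forall>(u, v)\<in>set R. \<kappa> u < \<kappa> v}) * (yvar ^ a * zvar ^ b)"
      by simp
    also have "card {\<kappa>\<in>Kset n g. \<forall>(u, v)\<in>set R. \<kappa> u < \<kappa> v} = card {xs\<in>Oset n g. bwd (set R) xs}"
      by (rule card_strict[OF g R])
    finally show "(\<Sum>\<kappa>\<in>Kset n g. wt \<kappa> c) = yvar ^ fst (snd c) * zvar ^ snd (snd c) * of_nat (card {xs\<in>Oset n g. bwd (set (fst c)) xs})"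
      by (simp add: cR mult.commute)
  qed
  finally show ?thesis .
qed


theorem theorem7p12:
  fixes n :: nat and E :: "(nat \<times> nat) multiset"
    and d :: "nat set \<Rightarrow> rpoly2" and c :: "nat list \<Rightarrow> rpoly2"
  assumes G: "set_mset E \<subseteq> {1..n} \<times> {1..n}"
    and Fexp: "\<forall>e. Bcoef n E (yvar + 1) (zvar + 1) e
                 = (\<Sum>S\<in>Pow {1..<n}. d S * of_nat (Fcoef n S e))"
    and Psiexp: "\<forall>e. (\<Sum>S\<in>Pow {1..<n}. d S * of_nat (Fcoef n (omega_set n S) e))
                 = (\<Sum>\<alpha>\<in>comps n. c \<alpha> * const2 (inverse (of_nat (zee \<alpha>))) * Psicoef n \<alpha> e)"
    and alpha: "\<alpha> \<in> comps n"
  shows "in_Nyz (c \<alpha>)"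
proof -
  obtain es where es: "mset es = E" using ex_mset by blast
  have esub: "set es \<subseteq> {1..n} \<times> {1..n}" using G es by auto
  define C where "C = (\<lambda>\<alpha>. sum_list (map (\<lambda>c. if acyclic (set (fst c)) then yvar ^ fst (snd c) * zvar ^ snd (snd c) * of_nat (rc (set (fst c)) n \<alpha>) else 0) (chs es)))"
  define W where "W = (\<lambda>e. \<Sum>S\<in>Pow {1..<n}. d S * of_nat (Fcoef n (omega_set n S) e))"
  define P where "P = (\<lambda>\<beta> \<alpha>. const2 (inverse (of_nat (pi_pair \<alpha> \<beta>))) :: rpoly2)"
  have CN: "in_Nyz (C \<alpha>)"
    unfolding C_def by (rule in_Nyz_sum_list) (auto simp: in_Nyz_monom in_Nyz_0)
  have Wc: "\<And>\<beta>. \<beta> \<in> comps n \<Longrightarrow> W (ex \<beta>) = (\<Sum>\<alpha>\<in>comps n. if comp_le \<alpha> \<beta> then c \<alpha> * P \<beta> \<alpha> else 0)"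
  proof -
    fix \<beta> assume \<beta>: "\<beta> \<in> comps n"
    have "W (ex \<beta>) = (\<Sum>\<alpha>\<in>comps n. c \<alpha> * const2 (inverse (of_nat (zee \<alpha>))) * Psicoef n \<alpha> (ex \<beta>))"
      using Psiexp by (simp add: W_def)
    also have "\<dots> = (\<Sum>\<alpha>\<in>comps n. if comp_le \<alpha> \<beta> then c \<alpha> * P \<beta> \<alpha> else 0)"
      using Psi_term[OF _ \<beta>] by (intro sum.cong refl) (simp add: P_def)
    finally show "W (ex \<beta>) = (\<Sum>\<alpha>\<in>comps n. if comp_le \<alpha> \<beta> then c \<alpha> * P \<beta> \<alpha> else 0)" .
  qed
  have WC: "\<And>\<beta>. \<beta> \<in> comps n \<Longrightarrow> W (ex \<beta>) = (\<Sum>\<alpha>\<in>comps n. if comp_le \<alpha> \<beta> then C \<alpha> * P \<beta> \<alpha> else 0)"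
  proof -
    fix \<beta> assume \<beta>: "\<beta> \<in> comps n"
    let ?G = "{\<gamma>\<in>comps n. comp_le \<gamma> (rev \<beta>)}"
    let ?M = "{1..<n}"
    let ?sg = "\<lambda>\<gamma>. (-1::int) ^ (n - length \<gamma>)"
    have fG: "finite ?G" using finite_comps by simp
    have s1: "W (ex \<beta>) = (\<Sum>S\<in>Pow ?M. d S * of_int (\<Sum>\<gamma>\<in>?G. ?sg \<gamma> * (if S \<subseteq> Sset \<gamma> then 1 else 0)))"
      unfolding W_def
    proof (rule sum.cong[OF refl])
      fix S assume S: "S \<in> Pow ?M"
      have oS: "omega_set n S \<subseteq> ?M" by (auto simp: omega_set_def)
      have "of_nat (Fcoef n (omega_set n S) (ex \<beta>)) = (of_int (if omega_set n S \<subseteq> Sset \<beta> then 1 else 0) :: rpoly2)"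
        using Fcoef_ex[OF \<beta> oS] by simp
      also have "\<dots> = of_int (\<Sum>\<gamma>\<in>?G. ?sg \<gamma> * (if S \<subseteq> Sset \<gamma> then 1 else 0))"
        using omega_alt[OF \<beta>, of S] S by simp
      finally show "d S * of_nat (Fcoef n (omega_set n S) (ex \<beta>)) = d S * of_int (\<Sum>\<gamma>\<in>?G. ?sg \<gamma> * (if S \<subseteq> Sset \<gamma> then 1 else 0))"
        by simp
    qed
    also have "\<dots> = (\<Sum>\<gamma>\<in>?G. of_int (?sg \<gamma>) * (\<Sum>S\<in>Pow ?M. d S * of_nat (Fcoef n S (ex \<gamma>))))"
    proof -
      have "(\<Sum>S\<in>Pow ?M. d S * of_int (\<Sum>\<gamma>\<in>?G. ?sg \<gamma> * (if S \<subseteq> Sset \<gamma> then 1 else 0)))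
          = (\<Sum>S\<in>Pow ?M. \<Sum>\<gamma>\<in>?G. d S * (of_int (?sg \<gamma>) * of_nat (Fcoef n S (ex \<gamma>))))"
      proof (intro sum.cong refl)
        fix S assume S: "S \<in> Pow ?M"
        have "of_int (\<Sum>\<gamma>\<in>?G. ?sg \<gamma> * (if S \<subseteq> Sset \<gamma> then 1 else 0)) = (\<Sum>\<gamma>\<in>?G. (of_int (?sg \<gamma>) * of_nat (Fcoef n S (ex \<gamma>)) :: rpoly2))"
          unfolding of_int_sum
        proof (intro sum.cong refl)
          fix \<gamma> assume "\<gamma> \<in> ?G"
          hence "Fcoef n S (ex \<gamma>) = (if S \<subseteq> Sset \<gamma> then 1 else 0)" using Fcoef_ex S by blast
          thus "of_int (?sg \<gamma> * (if S \<subseteq> Sset \<gamma> then 1 else 0)) = (of_int (?sg \<gamma>) * of_nat (Fcoef n S (ex \<gamma>)) :: rpoly2)"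
            by simp
        qed
        thus "d S * of_int (\<Sum>\<gamma>\<in>?G. ?sg \<gamma> * (if S \<subseteq> Sset \<gamma> then 1 else 0)) = (\<Sum>\<gamma>\<in>?G. d S * (of_int (?sg \<gamma>) * of_nat (Fcoef n S (ex \<gamma>))))"
          by (simp add: sum_distrib_left)
      qed
      also have "\<dots> = (\<Sum>\<gamma>\<in>?G. \<Sum>S\<in>Pow ?M. d S * (of_int (?sg \<gamma>) * of_nat (Fcoef n S (ex \<gamma>))))"
        by (rule sum.swap)
      also have "\<dots> = (\<Sum>\<gamma>\<in>?G. of_int (?sg \<gamma>) * (\<Sum>S\<in>Pow ?M. d S * of_nat (Fcoef n S (ex \<gamma>))))"
        by (simp add: sum_distrib_left algebra_simps)
      finally show ?thesis .
    qed
    also have "\<dots> = (\<Sum>\<gamma>\<in>?G. of_int (?sg \<gamma>) * Bcoef n E (yvar + 1) (zvar + 1) (ex \<gamma>))"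
      using Fexp by simp
    also have "\<dots> = (\<Sum>\<gamma>\<in>?G. of_int (?sg \<gamma>) * sum_list (map (\<lambda>c. yvar ^ fst (snd c) * zvar ^ snd (snd c) * of_nat (card {xs\<in>Oset n \<gamma>. bwd (set (fst c)) xs})) (chs es)))"
      using Bcoef_ex[OF _ esub] es by (intro sum.cong refl) auto
    also have "\<dots> = sum_list (map (\<lambda>c. \<Sum>\<gamma>\<in>?G. of_int (?sg \<gamma>) * (yvar ^ fst (snd c) * zvar ^ snd (snd c) * of_nat (card {xs\<in>Oset n \<gamma>. bwd (set (fst c)) xs}))) (chs es))"
      by (simp add: sum_list_const_mult[symmetric] sum_list_sum_swap)
    also have "\<dots> = sum_list (map (\<lambda>c. yvar ^ fst (snd c) * zvar ^ snd (snd c) * of_int (Lsum (set (fst c)) {1..n} \<beta>)) (chs es))"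
    proof (intro arg_cong[where f = sum_list] map_cong refl)
      fix ch
      have "(\<Sum>\<gamma>\<in>?G. of_int (?sg \<gamma>) * (yvar ^ fst (snd ch) * zvar ^ snd (snd ch) * of_nat (card {xs\<in>Oset n \<gamma>. bwd (set (fst ch)) xs})))
          = yvar ^ fst (snd ch) * zvar ^ snd (snd ch) * (\<Sum>\<gamma>\<in>?G. of_int (?sg \<gamma> * int (card {xs\<in>Oset n \<gamma>. bwd (set (fst ch)) xs})) :: rpoly2)"
        by (simp add: sum_distrib_left algebra_simps)
      also have "\<dots> = yvar ^ fst (snd ch) * zvar ^ snd (snd ch) * of_int (Lsum (set (fst ch)) {1..n} \<beta>)"
        unfolding Lsum_as_comps[OF \<beta>] of_int_sum ..
      finally show "(\<Sum>\<gamma>\<in>?G. of_int (?sg \<gamma>) * (yvar ^ fst (snd ch) * zvar ^ snd (snd ch) * of_nat (card {xs\<in>Oset n \<gamma>. bwd (set (fst ch)) xs})))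
          = yvar ^ fst (snd ch) * zvar ^ snd (snd ch) * of_int (Lsum (set (fst ch)) {1..n} \<beta>)" .
    qed
    also have "\<dots> = sum_list (map (\<lambda>c. \<Sum>\<alpha>\<in>comps n. if comp_le \<alpha> \<beta> then (if acyclic (set (fst c)) then yvar ^ fst (snd c) * zvar ^ snd (snd c) * of_nat (rc (set (fst c)) n \<alpha>) else 0) * P \<beta> \<alpha> else 0) (chs es))"
    proof (intro arg_cong[where f = sum_list] map_cong refl)
      fix ch assume ch: "ch \<in> set (chs es)"
      let ?R = "set (fst ch)"
      let ?m = "yvar ^ fst (snd ch) * zvar ^ snd (snd ch) :: rpoly2"
      have R: "?R \<subseteq> {1..n} \<times> {1..n}" using chs_sub[OF esub ch] .
      show "?m * of_int (Lsum ?R {1..n} \<beta>) = (\<Sum>\<alpha>\<in>comps n. if comp_le \<alpha> \<beta> then (if acyclic ?R then ?m * of_nat (rc ?R n \<alpha>) else 0) * P \<beta> \<alpha> else 0)"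
      proof (cases "acyclic ?R")
        case True
        have "of_int (Lsum ?R {1..n} \<beta>) = const2 (of_int (Lsum ?R {1..n} \<beta>))" by (simp add: const2_of_int)
        also have "\<dots> = const2 (Rsum ?R {1..n} \<beta>)" using main_identity[OF _ True comps_pos[OF \<beta>]] by simp
        also have "\<dots> = (\<Sum>\<alpha>\<in>comps n. if comp_le \<alpha> \<beta> then of_nat (rc ?R n \<alpha>) * P \<beta> \<alpha> else 0)"
          unfolding Rsum_as_comps[OF \<beta>] const2_sum
          by (intro sum.cong refl) (simp add: P_def const2_0 const2_mult[symmetric] const2_of_nat)
        finally have e: "of_int (Lsum ?R {1..n} \<beta>) = (\<Sum>\<alpha>\<in>comps n. if comp_le \<alpha> \<beta> then of_nat (rc ?R n \<alpha>) * P \<beta> \<alpha> else 0)" .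
        show ?thesis unfolding e sum_distrib_left by (intro sum.cong refl) (simp add: True mult.assoc)
      next
        case False
        thus ?thesis using Lsum_cyclic[OF R False] by (simp add: if_not_P[OF False] sum.neutral)
      qed
    qed
    also have "\<dots> = (\<Sum>\<alpha>\<in>comps n. sum_list (map (\<lambda>c. if comp_le \<alpha> \<beta> then (if acyclic (set (fst c)) then yvar ^ fst (snd c) * zvar ^ snd (snd c) * of_nat (rc (set (fst c)) n \<alpha>) else 0) * P \<beta> \<alpha> else 0) (chs es)))"
      by (rule sum_list_sum_swap[symmetric])
    also have "\<dots> = (\<Sum>\<alpha>\<in>comps n. if comp_le \<alpha> \<beta> then C \<alpha> * P \<beta> \<alpha> else 0)"
      by (intro sum.cong refl) (simp add: C_def sum_list_mult_const)
    finally show "W (ex \<beta>) = (\<Sum>\<alpha>\<in>comps n. if comp_le \<alpha> \<beta> then C \<alpha> * P \<beta> \<alpha> else 0)" .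
  qed
  have "\<forall>\<beta>\<in>comps n. (\<Sum>\<alpha>\<in>comps n. if comp_le \<alpha> \<beta> then (c \<alpha> - C \<alpha>) * const2 (inverse (of_nat (pi_pair \<alpha> \<beta>))) else 0) = 0"
  proof
    fix \<beta> assume \<beta>: "\<beta> \<in> comps n"
    have "(\<Sum>\<alpha>\<in>comps n. if comp_le \<alpha> \<beta> then (c \<alpha> - C \<alpha>) * const2 (inverse (of_nat (pi_pair \<alpha> \<beta>))) else 0)
        = (\<Sum>\<alpha>\<in>comps n. (if comp_le \<alpha> \<beta> then c \<alpha> * P \<beta> \<alpha> else 0) - (if comp_le \<alpha> \<beta> then C \<alpha> * P \<beta> \<alpha> else 0))"
      by (intro sum.cong refl) (simp add: P_def algebra_simps)
    also have "\<dots> = W (ex \<beta>) - W (ex \<beta>)" unfolding sum_subtractf Wc[OF \<beta>, symmetric] WC[OF \<beta>, symmetric] ..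
    finally show "(\<Sum>\<alpha>\<in>comps n. if comp_le \<alpha> \<beta> then (c \<alpha> - C \<alpha>) * const2 (inverse (of_nat (pi_pair \<alpha> \<beta>))) else 0) = 0" by simp
  qed
  hence "c \<alpha> - C \<alpha> = 0" by (rule triangular) (rule alpha)
  hence "c \<alpha> = C \<alpha>" by simp
  thus ?thesis using CN by simp
qed


end
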